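(* Let $p\ge1$, $k\ge1$, $r\in\{0,\dots,p-1\}$, and suppose $(c,\{f_i\}_{i=0}^k)$ belongs to $\mathcal M_r(\alpha,\bar b,\bar\rho)$ for some $\bar b<\infty$ and $\bar\rho<1$. Then $f_i$ is continuous for $i\in\{1,\dots,k-1\}$, and the map $\chi:\mathbb R^p\to\mathbb R^p$ is a homeomorphism. If in addition $f_0$ is bi-Lipschitz with bi-Lipschitz constant $C_{f_0}$, then $\chi$ is also bi-Lipschitz, with a bi-Lipschitz constant that depends only on $\alpha$, $\bar b$, $\bar\rho$ and $C_{f_0}$.
   Context: A map $f$ is bi-Lipschitz with constant $C_0$ if $C_0^{-1}\|x-x'\|\le\|f(x)-f(x')\|\le C_0\|x-x'\|$ for all $x,x'$. Model: for $c\in\mathbb R^p$ and $f_0,\dots,f_k:\mathbb R^p\to\mathbb R^p$ with $f_i(0)=0$, the VAR $f_0(z_t)=c+\sum_{i=1}^k f_i(z_{t-i})+u_t$. (When $k=1$, blocks indexed by $1,\dots,k-1$ are empty.) Define $g_j(z)=-\sum_{i=j+1}^k f_i(z)$; $\pi(z)=-f_0(z)+\sum_{i=1}^k f_i(z)$; $\mathbf g=(g_1^\top,\dots,g_{k-1}^\top)^\top$. $D\in\mathbb R^{p(k-1)\times p(k-1)}$ has $-I_p$ diagonal blocks, $I_p$ blocks immediately above the diagonal, zeros elsewhere; $E=(I_p,0_{p\times p(k-2)})^\top$. $\alpha_\perp$ is $p\times(p-r)$ of rank $p-r$ with $\alpha_\perp^\top\alpha=0$; $\boldsymbol\alpha=\begin{bmatrix}\alpha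 & E^\top\\ 0 & I_{p(k-1)}\end{bmatrix}$; for $\theta:\mathbb R^p\to\mathbb R^r$, $\boldsymbol\theta=(\theta^\top,\mathbf g^\top)^\top$, $\mathbf D_0=\begin{bmatrix}0_{r\times p}&0\\0&D\end{bmatrix}$. $\rho_{JSR}(\mathcal A)=\limsup_{t}\sup\{\rho(M_1\cdots M_t)^{1/t}:M_s\in\mathcal A\}$. Class $\mathcal M_r(\alpha,\bar b,\bar\rho)$ ($\alpha\in\mathbb R^{p\times r}$ of rank $r$): (i) $f_0$ is a homeomorphism of $\mathbb R^p$; (ii) there exist $\mu\in\mathbb R^r$, $\theta:\mathbb R^p\to\mathbb R^r$ with $c=\alpha\mu$, $\pi=\alpha\theta$; (iii) there is a closed $\mathcal B\subset\mathbb R^{kp\times[p(k-1)+r]}$ with $\max_{\mathcal B}\|\boldsymbol\beta\|\le\bar b$ and $\rho_{JSR}(\{I+\boldsymbol\beta^\top\boldsymbol\alpha:\boldsymbol\beta\in\mathcal B\})\le\bar\rho$, such that for all $\mathbf z=(z^\top,\boldsymbol\zeta^\top)^\top,\mathbf z'\in\mathbb R^{kp}$ some $\boldsymbol\beta\in\mathcal B$ satisfies $[\boldsymbol\theta(f_0^{-1}(z))+\mathbf D_0\mathbf z]-[\boldsymbol\theta(f_0^{-1}(z'))+\mathbf D_0\mathbf z']=\boldsymbol\beta^\top(\mathbf z-\mathbf z')$. $\psi(z)=\alpha_\perp^\top[f_0(z)-\sum_{i=1}^{k-1}g_i(z)]$, $\chi(z)=(\psi(z)^\top,\theta(z)^\top)^\top$.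 *)

theory Defs
  imports "HOL-Analysis.Analysis" "Jordan_Normal_Form.Spectral_Radius" "Jordan_Normal_Form.DL_Rank"
begin

text \<open>Vectors of R^n are rendered as elements of carrier_vec n (type real vec),
  matrices of R^(n x m) as elements of carrier_mat n m (type real mat).\<close>

definition vnorm :: "real vec \<Rightarrow> real" where
  "vnorm v = sqrt (v \<bullet> v)"

definition mnorm :: "real mat \<Rightarrow> real" where
  "mnorm A = Sup {vnorm (A *\<^sub>v x) | x. x \<in> carrier_vec (dim_col A) \<and> vnorm x \<le> 1}"

definition sprad :: "real mat \<Rightarrow> real" where
  "sprad A = (if dim_row A = 0 then 0 else spectral_radius (map_mat complex_of_real A))"

definition jsr :: "nat \<Rightarrow> real mat set \<Rightarrow> ereal" where
  "jsr n \<A> = limsup (\<lambda>t. Sup ((\<lambda>Ms. ereal (root t (sprad (foldr (*) Ms (1\<^sub>m n)))))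
                          ` {Ms. length Ms = t \<and> set Ms \<subseteq> \<A>}))"

definition closed_mat_set :: "nat \<Rightarrow> nat \<Rightarrow> real mat set \<Rightarrow> bool" where
  "closed_mat_set n m B \<longleftrightarrow> B \<subseteq> carrier_mat n m \<and>
     (\<forall>X M. (\<forall>t. X t \<in> B) \<and> M \<in> carrier_mat n m \<and>
        (\<forall>i<n. \<forall>j<m. (\<lambda>t. X t $$ (i,j)) \<longlonglongrightarrow> M $$ (i,j)) \<longrightarrow> M \<in> B)"

definition vcont_on :: "nat \<Rightarrow> (real vec \<Rightarrow> real vec) \<Rightarrow> bool" where
  "vcont_on p g \<longleftrightarrow> (\<forall>x\<in>carrier_vec p. \<forall>e>0. \<exists>d>0. \<forall>y\<in>carrier_vec p.
      vnorm (y - x) < d \<longrightarrow> vnorm (g y - g x) < e)"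

definition vhomeo :: "nat \<Rightarrow> (real vec \<Rightarrow> real vec) \<Rightarrow> bool" where
  "vhomeo p g \<longleftrightarrow> bij_betw g (carrier_vec p) (carrier_vec p) \<and> vcont_on p g
      \<and> vcont_on p (the_inv_into (carrier_vec p) g)"

definition bilip :: "nat \<Rightarrow> (real vec \<Rightarrow> real vec) \<Rightarrow> real \<Rightarrow> bool" where
  "bilip p g C \<longleftrightarrow> (\<forall>x\<in>carrier_vec p. \<forall>y\<in>carrier_vec p.
      inverse C * vnorm (x - y) \<le> vnorm (g x - g y) \<and> vnorm (g x - g y) \<le> C * vnorm (x - y))"

definition gmap :: "nat \<Rightarrow> nat \<Rightarrow> (nat \<Rightarrow> real vec \<Rightarrow> real vec) \<Rightarrow> nat \<Rightarrow> real vec \<Rightarrow> real vec" where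
  "gmap p k f j z = vec p (\<lambda>l. - (\<Sum>i\<in>{j+1..k}. f i z $ l))"

definition pimap :: "nat \<Rightarrow> nat \<Rightarrow> (nat \<Rightarrow> real vec \<Rightarrow> real vec) \<Rightarrow> real vec \<Rightarrow> real vec" where
  "pimap p k f z = vec p (\<lambda>l. - f 0 z $ l + (\<Sum>i\<in>{1..k}. f i z $ l))"

text \<open>bold g = (g_1, ..., g_{k-1}) stacked, in R^(p(k-1)).\<close>
definition gvec :: "nat \<Rightarrow> nat \<Rightarrow> (nat \<Rightarrow> real vec \<Rightarrow> real vec) \<Rightarrow> real vec \<Rightarrow> real vec" where
  "gvec p k f z = vec (p * (k - 1)) (\<lambda>a. gmap p k f (a div p + 1) z $ (a mod p))"

definition Dmat :: "nat \<Rightarrow> nat \<Rightarrow> real mat" where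
  "Dmat p k = mat (p * (k - 1)) (p * (k - 1)) (\<lambda>(a,b).
     if a mod p = b mod p then (if a div p = b div p then -1
        else if b div p = a div p + 1 then 1 else 0) else 0)"

definition Etr :: "nat \<Rightarrow> nat \<Rightarrow> real mat" where
  "Etr p k = mat p (p * (k - 1)) (\<lambda>(i,j). if i = j then 1 else 0)"

definition bold_alpha :: "nat \<Rightarrow> nat \<Rightarrow> nat \<Rightarrow> real mat \<Rightarrow> real mat" where
  "bold_alpha p k r \<alpha> = four_block_mat \<alpha> (Etr p k) (0\<^sub>m (p * (k - 1)) r) (1\<^sub>m (p * (k - 1)))"

definition D0mat :: "nat \<Rightarrow> nat \<Rightarrow> nat \<Rightarrow> real mat" where
  "D0mat p k r = four_block_mat (0\<^sub>m r p) (0\<^sub>m r (p * (k - 1))) (0\<^sub>m (p * (k - 1)) p) (Dmat p k)"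

definition bold_theta :: "nat \<Rightarrow> nat \<Rightarrow> (nat \<Rightarrow> real vec \<Rightarrow> real vec) \<Rightarrow> (real vec \<Rightarrow> real vec) \<Rightarrow> real vec \<Rightarrow> real vec" where
  "bold_theta p k f \<theta> x = \<theta> x @\<^sub>v gvec p k f x"

text \<open>Membership of (c, f_0..f_k) in M_r(alpha, bbar, rhobar), with theta the map of condition (ii).\<close>
definition in_class :: "nat \<Rightarrow> nat \<Rightarrow> nat \<Rightarrow> real mat \<Rightarrow> real \<Rightarrow> real \<Rightarrow> real vec
      \<Rightarrow> (nat \<Rightarrow> real vec \<Rightarrow> real vec) \<Rightarrow> (real vec \<Rightarrow> real vec) \<Rightarrow> bool" where
  "in_class p k r \<alpha> bbar rhobar c f \<theta> \<longleftrightarrow>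
     vhomeo p (f 0)
   \<and> (\<exists>\<mu>\<in>carrier_vec r. c = \<alpha> *\<^sub>v \<mu>)
   \<and> (\<forall>z\<in>carrier_vec p. \<theta> z \<in> carrier_vec r \<and> pimap p k f z = \<alpha> *\<^sub>v \<theta> z)
   \<and> (\<exists>B. closed_mat_set (k * p) (p * (k - 1) + r) B
        \<and> (\<forall>\<beta>\<in>B. mnorm \<beta> \<le> bbar)
        \<and> jsr (p * (k - 1) + r) {1\<^sub>m (p * (k - 1) + r) + transpose_mat \<beta> * bold_alpha p k r \<alpha> | \<beta>. \<beta> \<in> B}
            \<le> ereal rhobar
        \<and> (\<forall>z\<in>carrier_vec (k * p). \<forall>z'\<in>carrier_vec (k * p). \<exists>\<beta>\<in>B.
            (bold_theta p k f \<theta> (the_inv_into (carrier_vec p) (f 0) (vec_first z p)) + D0mat p k r *\<^sub>v z)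
          - (bold_theta p k f \<theta> (the_inv_into (carrier_vec p) (f 0) (vec_first z' p)) + D0mat p k r *\<^sub>v z')
          = transpose_mat \<beta> *\<^sub>v (z - z')))"

definition psi_map :: "nat \<Rightarrow> nat \<Rightarrow> real mat \<Rightarrow> (nat \<Rightarrow> real vec \<Rightarrow> real vec) \<Rightarrow> real vec \<Rightarrow> real vec" where
  "psi_map p k \<alpha>perp f z = transpose_mat \<alpha>perp *\<^sub>v vec p (\<lambda>l. f 0 z $ l - (\<Sum>i\<in>{1..k-1}. gmap p k f i z $ l))"

definition chi_map :: "nat \<Rightarrow> nat \<Rightarrow> real mat \<Rightarrow> (nat \<Rightarrow> real vec \<Rightarrow> real vec) \<Rightarrow> (real vec \<Rightarrow> real vec) \<Rightarrow> real vec \<Rightarrow> real vec" where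
  "chi_map p k \<alpha>perp f \<theta> z = psi_map p k \<alpha>perp f z @\<^sub>v \<theta> z"

end

theory Submission
  imports Defs "HOL-Homology.Invariance_of_Domain"
begin





















lemma vnorm_L2: "vnorm v = L2_set (\<lambda>i. v $ i) {0..<dim_vec v}"
  unfolding vnorm_def L2_set_def scalar_prod_def by (simp add: power2_eq_square)

lemma vnorm_nonneg: "vnorm v \<ge> 0"
  unfolding vnorm_L2 by (rule L2_set_nonneg)

lemma vnorm_comp: "i < dim_vec v \<Longrightarrow> \<bar>v $ i\<bar> \<le> vnorm v"
  unfolding vnorm_L2 using member_le_L2_set[of "{0..<dim_vec v}" i "\<lambda>i. \<bar>v $ i\<bar>"]
  by (simp add: L2_set_def)

lemma vnorm_le_sum: "vnorm v \<le> (\<Sum>i<dim_vec v. \<bar>v $ i\<bar>)"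
  unfolding vnorm_L2 using L2_set_le_sum_abs[of "\<lambda>i. v $ i" "{0..<dim_vec v}"]
  by (simp add: lessThan_atLeast0)

lemma vnorm_add: "dim_vec u = dim_vec v \<Longrightarrow> vnorm (u + v) \<le> vnorm u + vnorm v"
  unfolding vnorm_L2 using L2_set_triangle_ineq[of "\<lambda>i. u $ i" "\<lambda>i. v $ i" "{0..<dim_vec v}"]
  by (simp add: L2_set_def)

lemma vnorm_zero_iff: "vnorm v = 0 \<longleftrightarrow> v = 0\<^sub>v (dim_vec v)"
proof
  assume "vnorm v = 0"
  then have "\<forall>i<dim_vec v. v $ i = 0" using vnorm_comp[of _ v] by fastforce
  then show "v = 0\<^sub>v (dim_vec v)" by (intro eq_vecI) auto
next
  assume "v = 0\<^sub>v (dim_vec v)"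
  then show "vnorm v = 0" unfolding vnorm_def
    by (metis dim_vec index_zero_vec(2) real_sqrt_eq_zero_cancel_iff scalar_prod_left_zero zero_carrier_vec)
qed

lemma vnorm_zero[simp]: "vnorm (0\<^sub>v n) = 0"
  using vnorm_zero_iff[of "0\<^sub>v n"] by simp

lemma vnorm_smult: "vnorm (a \<cdot>\<^sub>v v) = \<bar>a\<bar> * vnorm v"
proof -
  have "(a \<cdot>\<^sub>v v) \<bullet> (a \<cdot>\<^sub>v v) = a^2 * (v \<bullet> v)"
    unfolding scalar_prod_def by (simp add: sum_distrib_left power2_eq_square algebra_simps)
  then show ?thesis unfolding vnorm_def by (simp add: real_sqrt_mult)
qed

lemma vnorm_uminus: "vnorm (- v) = vnorm v"
proof -
  have "- v = (-1) \<cdot>\<^sub>v v" by (intro eq_vecI) auto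
  then show ?thesis using vnorm_smult[of "-1" v] by simp
qed

lemma vnorm_diff_sym: "dim_vec u = dim_vec v \<Longrightarrow> vnorm (u - v) = vnorm (v - u)"
proof -
  assume d: "dim_vec u = dim_vec v"
  have "u - v = - (v - u)" by (intro eq_vecI) (auto simp: d)
  then show ?thesis by (simp add: vnorm_uminus)
qed

lemma vnorm_diff_tri: "dim_vec u = dim_vec v \<Longrightarrow> dim_vec w = dim_vec v \<Longrightarrow>
   vnorm (u - w) \<le> vnorm (u - v) + vnorm (v - w)"
proof -
  assume d: "dim_vec u = dim_vec v" "dim_vec w = dim_vec v"
  have "u - w = (u - v) + (v - w)" by (intro eq_vecI) (auto simp: d)
  then show ?thesis using vnorm_add[of "u - v" "v - w"] d by simp
qed

lemma vnorm_append: "vnorm (u @\<^sub>v v) = sqrt ((vnorm u)^2 + (vnorm v)^2)"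
proof -
  have "(u @\<^sub>v v) \<bullet> (u @\<^sub>v v) = u \<bullet> u + v \<bullet> v"
    by (rule scalar_prod_append[of _ "dim_vec u" _ "dim_vec v"]) auto
  moreover have "u \<bullet> u \<ge> 0" "v \<bullet> v \<ge> 0" unfolding scalar_prod_def
    by (auto intro!: sum_nonneg)
  ultimately show ?thesis unfolding vnorm_def by simp
qed

lemma vnorm_append_ge1: "vnorm u \<le> vnorm (u @\<^sub>v v)"
  unfolding vnorm_append by (simp add: real_le_rsqrt vnorm_nonneg)

lemma vnorm_append_ge2: "vnorm v \<le> vnorm (u @\<^sub>v v)"
  unfolding vnorm_append by (simp add: real_le_rsqrt vnorm_nonneg)

lemma vnorm_append_le: "vnorm (u @\<^sub>v v) \<le> vnorm u + vnorm v"
  unfolding vnorm_append using vnorm_nonneg[of u] vnorm_nonneg[of v]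
  by (simp add: sqrt_sum_squares_le_sum)

definition mabs :: "real mat \<Rightarrow> real" where
  "mabs A = (\<Sum>i<dim_row A. \<Sum>j<dim_col A. \<bar>A $$ (i,j)\<bar>)"

lemma mabs_nonneg: "mabs A \<ge> 0" unfolding mabs_def by (auto intro!: sum_nonneg)

lemma mult_vec_comp_bound:
  assumes "i < dim_row A" "dim_vec v = dim_col A"
  shows "\<bar>(A *\<^sub>v v) $ i\<bar> \<le> (\<Sum>j<dim_col A. \<bar>A $$ (i,j)\<bar>) * vnorm v"
proof -
  have "\<bar>(A *\<^sub>v v) $ i\<bar> = \<bar>\<Sum>j<dim_col A. A $$ (i,j) * v $ j\<bar>"
    using assms by (simp add: scalar_prod_def lessThan_atLeast0)
  also have "\<dots> \<le> (\<Sum>j<dim_col A. \<bar>A $$ (i,j)\<bar> * vnorm v)"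
    by (rule order_trans[OF sum_abs], rule sum_mono)
      (use assms vnorm_comp[of _ v] in \<open>auto simp: abs_mult intro!: mult_left_mono\<close>)
  finally show ?thesis by (simp add: sum_distrib_right)
qed

lemma vnorm_mult_le: 
  assumes "dim_vec v = dim_col A"
  shows "vnorm (A *\<^sub>v v) \<le> mabs A * vnorm v"
proof -
  have "vnorm (A *\<^sub>v v) \<le> (\<Sum>i<dim_row A. \<bar>(A *\<^sub>v v) $ i\<bar>)"
    using vnorm_le_sum[of "A *\<^sub>v v"] by simp
  also have "\<dots> \<le> (\<Sum>i<dim_row A. (\<Sum>j<dim_col A. \<bar>A $$ (i,j)\<bar>) * vnorm v)"
    by (rule sum_mono, rule mult_vec_comp_bound) (use assms in auto)
  finally show ?thesis unfolding mabs_def by (simp add: sum_distrib_right)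
qed



lemma vnorm_sq: "(vnorm v)^2 = v \<bullet> v"
proof -
  have "v \<bullet> v \<ge> 0" unfolding scalar_prod_def by (auto intro!: sum_nonneg)
  then show ?thesis unfolding vnorm_def by simp
qed

lemma cauchy_schwarz_vec:
  assumes "dim_vec u = dim_vec v"
  shows "\<bar>u \<bullet> v\<bar> \<le> vnorm u * vnorm v"
proof -
  have "\<bar>u \<bullet> v\<bar> \<le> (\<Sum>i\<in>{0..<dim_vec v}. \<bar>u $ i\<bar> * \<bar>v $ i\<bar>)"
    unfolding scalar_prod_def by (rule order_trans[OF sum_abs]) (simp add: abs_mult)
  also have "\<dots> \<le> L2_set (\<lambda>i. u $ i) {0..<dim_vec v} * L2_set (\<lambda>i. v $ i) {0..<dim_vec v}"
    by (rule L2_set_mult_ineq)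
  finally show ?thesis using assms by (simp add: vnorm_L2)
qed

lemma mnorm_upper:
  assumes A: "A \<in> carrier_mat m n" and y: "y \<in> carrier_vec n" "vnorm y \<le> 1"
  shows "vnorm (A *\<^sub>v y) \<le> mnorm A"
proof -
  define S where "S = {vnorm (A *\<^sub>v x) | x. x \<in> carrier_vec (dim_col A) \<and> vnorm x \<le> 1}"
  have bdd: "bdd_above S"
  proof (rule bdd_aboveI[of _ "mabs A"])
    fix s assume "s \<in> S"
    then obtain y where y: "y \<in> carrier_vec (dim_col A)" "vnorm y \<le> 1" "s = vnorm (A *\<^sub>v y)"
      unfolding S_def by auto
    have "s \<le> mabs A * vnorm y" using y vnorm_mult_le[of y A] by auto
    also have "\<dots> \<le> mabs A" using y mabs_nonneg[of A] by (simp add: mult_left_le)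
    finally show "s \<le> mabs A" .
  qed
  show ?thesis
    unfolding mnorm_def using y A by (intro cSup_upper[OF _ bdd[unfolded S_def]]) auto
qed

lemma mnorm_nonneg: assumes A: "A \<in> carrier_mat m n" shows "0 \<le> mnorm A"
proof -
  have "vnorm (A *\<^sub>v 0\<^sub>v n) \<le> mnorm A" by (rule mnorm_upper[OF A]) (auto simp: vnorm_zero_iff)
  then show ?thesis using vnorm_nonneg order_trans by blast
qed

lemma mnorm_bound:
  assumes A: "A \<in> carrier_mat m n" and x: "x \<in> carrier_vec n"
  shows "vnorm (A *\<^sub>v x) \<le> mnorm A * vnorm x"
proof -
  note mem = mnorm_upper[OF A]
  show ?thesis
  proof (cases "vnorm x = 0")
    case True
    then have "x = 0\<^sub>v n" using vnorm_zero_iff[of x] x by auto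
    then have "A *\<^sub>v x = 0\<^sub>v m" using A by auto
    moreover have "vnorm (0\<^sub>v m :: real vec) = 0" using vnorm_zero_iff by auto
    ultimately show ?thesis using True by simp
  next
    case False
    then have pos: "vnorm x > 0" using vnorm_nonneg[of x] by auto
    define y where "y = (1 / vnorm x) \<cdot>\<^sub>v x"
    have y: "y \<in> carrier_vec n" "vnorm y = 1" unfolding y_def using x pos by (auto simp: vnorm_smult)
    have "A *\<^sub>v y = (1 / vnorm x) \<cdot>\<^sub>v (A *\<^sub>v x)" unfolding y_def using A x
      by (simp add: mult_mat_vec)
    then have "vnorm (A *\<^sub>v y) = vnorm (A *\<^sub>v x) / vnorm x" using pos by (simp add: vnorm_smult)
    with mem[OF y(1)] y(2) pos show ?thesis by (simp add: divide_le_eq mult.commute)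
  qed
qed

lemma mnorm_transpose_bound:
  assumes A: "A \<in> carrier_mat m n" and u: "u \<in> carrier_vec m"
  shows "vnorm (transpose_mat A *\<^sub>v u) \<le> mnorm A * vnorm u"
proof -
  let ?w = "transpose_mat A *\<^sub>v u"
  have w: "?w \<in> carrier_vec n" using A by (intro carrier_vecI) simp
  have "(vnorm ?w)^2 = ?w \<bullet> ?w" by (rule vnorm_sq)
  also have "\<dots> = u \<bullet> (A *\<^sub>v ?w)" by (rule transpose_vec_mult_scalar[OF A w u])
  also have "\<dots> \<le> vnorm u * vnorm (A *\<^sub>v ?w)"
    using cauchy_schwarz_vec[of u "A *\<^sub>v ?w"] A u by auto
  also have "\<dots> \<le> vnorm u * (mnorm A * vnorm ?w)"
    by (rule mult_left_mono[OF mnorm_bound[OF A w] vnorm_nonneg])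
  finally have *: "(vnorm ?w)^2 \<le> (vnorm u * mnorm A) * vnorm ?w" by (simp add: ac_simps)
  show ?thesis
  proof (cases "vnorm ?w = 0")
    case True
    have "0 \<le> mnorm A * vnorm u" using mnorm_nonneg[OF A] vnorm_nonneg[of u] by simp
    then show ?thesis using True by simp
  next
    case False
    then have "vnorm ?w > 0" using vnorm_nonneg[of ?w] by linarith
    with * show ?thesis by (simp add: power2_eq_square mult.commute)
  qed
qed



lemma box_open: "open {z::nat\<Rightarrow>real. \<forall>i<n. \<bar>z i - y i\<bar> < d}"
proof -
  have "{z::nat\<Rightarrow>real. \<forall>i<n. \<bar>z i - y i\<bar> < d} = (\<Inter>i\<in>{..<n}. {z. \<bar>z i - y i\<bar> < d})" by auto
  also have "open \<dots>"
    by (rule open_INT) (auto intro!: open_Collect_less continuous_intros)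
  finally show ?thesis .
qed

lemma vnorm_vec_box:
  assumes "\<forall>i<n. \<bar>z i - y i\<bar> < d" "d > 0"
  shows "vnorm (vec n z - vec n y) \<le> real n * d"
proof -
  have "vnorm (vec n z - vec n y) \<le> (\<Sum>i<n. \<bar>(vec n z - vec n y) $ i\<bar>)"
    using vnorm_le_sum[of "vec n z - vec n y"] by simp
  also have "\<dots> \<le> (\<Sum>i<n. d)" by (rule sum_mono) (use assms in auto)
  finally show ?thesis by simp
qed

lemma approx_attained:
  assumes F: "\<forall>x\<in>carrier_vec n. F x \<in> carrier_vec n" and cont: "vcont_on n F" and c: "c > 0"
    and low: "\<forall>x\<in>carrier_vec n. \<forall>y\<in>carrier_vec n. c * vnorm (x - y) \<le> vnorm (F x - F y)"
    and y: "y \<in> carrier_vec n"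
    and appr: "\<forall>d>0. \<exists>v\<in>carrier_vec n. vnorm (F v - y) < d"
  shows "\<exists>v\<in>carrier_vec n. F v = y"
proof -
  have "\<forall>m. \<exists>v. v \<in> carrier_vec n \<and> vnorm (F v - y) < 1 / Suc m"
  proof
    fix m
    have "(1::real) / Suc m > 0" by simp
    then show "\<exists>v. v \<in> carrier_vec n \<and> vnorm (F v - y) < 1 / Suc m" using appr by blast
  qed
  from choice[OF this] obtain v where vv: "\<forall>m. v m \<in> carrier_vec n \<and> vnorm (F (v m) - y) < 1 / Suc m"
    by blast
  then have v: "\<And>m. v m \<in> carrier_vec n" "\<And>m. vnorm (F (v m) - y) < 1 / Suc m" by auto
  have Fv: "F (v m) \<in> carrier_vec n" for m using F v by auto
  have dist_v: "vnorm (v m - v l) \<le> (1 / Suc m + 1 / Suc l) / c" for m l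
  proof -
    have "c * vnorm (v m - v l) \<le> vnorm (F (v m) - F (v l))" using low v by auto
    also have "\<dots> \<le> vnorm (F (v m) - y) + vnorm (y - F (v l))"
      by (rule vnorm_diff_tri) (use Fv y in auto)
    also have "\<dots> \<le> 1 / Suc m + 1 / Suc l"
      using v(2)[of m] v(2)[of l] vnorm_diff_sym[of y "F (v l)"] Fv[of l] y by auto
    finally show ?thesis using c by (simp add: le_divide_eq mult.commute)
  qed
  have cauchy: "Cauchy (\<lambda>m. v m $ i)" if i: "i < n" for i
  proof (rule CauchyI)
    fix e :: real assume e: "e > 0"
    obtain M :: nat where M: "2 / (c * e) < M" using reals_Archimedean2 by blast
    have ce: "c * e > 0" using c e by simp
    have key: "2 / (c * Suc M) < e"
    proof -
      have "2 < M * (c * e)" using M ce by (simp add: pos_divide_less_eq)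
      also have "\<dots> \<le> Suc M * (c * e)" using ce by (intro mult_right_mono) auto
      also have "\<dots> = e * (c * Suc M)" by simp
      finally have "2 < e * (c * Suc M)" .
      moreover have "c * Suc M > 0" using c by simp
      ultimately show ?thesis by (simp add: pos_divide_less_eq)
    qed
    show "\<exists>M. \<forall>m\<ge>M. \<forall>l\<ge>M. norm (v m $ i - v l $ i) < e"
    proof (intro exI allI impI)
      fix m l assume ml: "M \<le> m" "M \<le> l"
      have "norm (v m $ i - v l $ i) = \<bar>(v m - v l) $ i\<bar>" using v(1)[of m] v(1)[of l] i by auto
      also have "\<dots> \<le> vnorm (v m - v l)" by (rule vnorm_comp) (use v(1)[of m] v(1)[of l] i in auto)
      also have "\<dots> \<le> (1 / Suc m + 1 / Suc l) / c" by (rule dist_v)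
      also have "\<dots> \<le> (1 / Suc M + 1 / Suc M) / c"
        using ml c by (intro divide_right_mono add_mono) (auto simp: frac_le)
      also have "\<dots> = 2 / (c * Suc M)" by simp
      finally show "norm (v m $ i - v l $ i) < e" using key by linarith
    qed
  qed
  define x where "x = vec n (\<lambda>i. lim (\<lambda>m. v m $ i))"
  have x: "x \<in> carrier_vec n" unfolding x_def by simp
  have conv: "(\<lambda>m. v m $ i) \<longlonglongrightarrow> x $ i" if "i < n" for i
    using cauchy[OF that] that unfolding x_def Cauchy_convergent_iff convergent_LIMSEQ_iff by simp
  have vx: "(\<lambda>m. vnorm (v m - x)) \<longlonglongrightarrow> 0"
  proof (rule real_tendsto_sandwich)
    show "\<forall>\<^sub>F m in sequentially. 0 \<le> vnorm (v m - x)" by (simp add: vnorm_nonneg)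
    show "\<forall>\<^sub>F m in sequentially. vnorm (v m - x) \<le> (\<Sum>i<n. \<bar>v m $ i - x $ i\<bar>)"
      using vnorm_le_sum[of "v m - x" for m] v x by auto
    show "(\<lambda>m. 0) \<longlonglongrightarrow> (0::real)" by simp
    have "(\<lambda>m. \<Sum>i<n. \<bar>v m $ i - x $ i\<bar>) \<longlonglongrightarrow> (\<Sum>i<n. 0)"
      by (intro tendsto_sum tendsto_rabs_zero LIM_zero conv) auto
    then show "(\<lambda>m. \<Sum>i<n. \<bar>v m $ i - x $ i\<bar>) \<longlonglongrightarrow> 0" by simp
  qed
  have "F x = y"
  proof (rule ccontr)
    assume ne: "F x \<noteq> y"
    define eta where "eta = vnorm (F x - y)"
    have "eta \<noteq> 0"
    proof
      assume "eta = 0"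
      have "F x = y"
      proof (rule eq_vecI)
        fix i assume "i < dim_vec y"
        then have "\<bar>(F x - y) $ i\<bar> \<le> 0" using vnorm_comp[of i "F x - y"] \<open>eta = 0\<close> F x y
          unfolding eta_def by auto
        then show "F x $ i = y $ i" using \<open>i < dim_vec y\<close> by auto
      qed (use F x y in auto)
      with ne show False by simp
    qed
    then have eta: "eta > 0" unfolding eta_def using vnorm_nonneg[of "F x - y"] by linarith
    have "\<forall>e>0. \<exists>d>0. \<forall>z\<in>carrier_vec n. vnorm (z - x) < d \<longrightarrow> vnorm (F z - F x) < e"
      using cont x unfolding vcont_on_def by blast
    then obtain d where d: "d > 0" "\<forall>z\<in>carrier_vec n. vnorm (z - x) < d \<longrightarrow> vnorm (F z - F x) < eta / 2"
      using eta by (meson half_gt_zero)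
    have ev1: "\<forall>\<^sub>F m in sequentially. vnorm (v m - x) < d" using order_tendstoD(2)[OF vx d(1)] .
    have ev2: "\<forall>\<^sub>F m in sequentially. inverse (real (Suc m)) < eta / 2"
      by (rule order_tendstoD(2)[OF LIMSEQ_inverse_real_of_nat]) (use eta in simp)
    have Fx: "F x \<in> carrier_vec n" using F x by auto
    obtain m where m: "vnorm (v m - x) < d" "inverse (real (Suc m)) < eta / 2"
      using eventually_happens'[OF _ eventually_conj[OF ev1 ev2]] by auto
    have "eta \<le> vnorm (F x - F (v m)) + vnorm (F (v m) - y)"
      unfolding eta_def by (rule vnorm_diff_tri) (use Fx y Fv[of m] in auto)
    also have "vnorm (F x - F (v m)) < eta / 2"
      using d(2) v(1)[of m] m(1) vnorm_diff_sym[of "F x" "F (v m)"] Fx Fv[of m] by auto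
    also have "vnorm (F (v m) - y) < eta / 2" using v(2)[of m] m(2) by (simp add: inverse_eq_divide)
    finally show False by simp
  qed
  then show ?thesis using x by auto
qed


lemma surj_lower_lip:
  assumes F: "\<forall>x\<in>carrier_vec n. F x \<in> carrier_vec n" and cont: "vcont_on n F" and c: "c > 0"
    and low: "\<forall>x\<in>carrier_vec n. \<forall>y\<in>carrier_vec n. c * vnorm (x - y) \<le> vnorm (F x - F y)"
  shows "F ` carrier_vec n = carrier_vec n"
proof -
  define E where "E = topspace (Euclidean_space n)"
  have E: "E = {x. \<forall>i\<ge>n. x i = 0}" unfolding E_def by (simp add: topspace_Euclidean_space)
  define G where "G = (\<lambda>x::nat\<Rightarrow>real. \<lambda>i. if i < n then F (vec n x) $ i else 0)"
  have Fvec: "F (vec n x) \<in> carrier_vec n" for x using F by auto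
  have compcont: "continuous_on E (\<lambda>x. F (vec n x) $ i)" if i: "i < n" for i
    unfolding continuous_on_topological
  proof (intro ballI allI impI)
    fix x B assume x: "x \<in> E" and B: "open B" "F (vec n x) $ i \<in> B"
    obtain e where e: "e > 0" "ball (F (vec n x) $ i) e \<subseteq> B" using B open_contains_ball by blast
    have "\<forall>e>0. \<exists>d>0. \<forall>z\<in>carrier_vec n. vnorm (z - vec n x) < d \<longrightarrow> vnorm (F z - F (vec n x)) < e"
      using cont unfolding vcont_on_def by simp
    then obtain d where d: "d > 0" "\<forall>z\<in>carrier_vec n. vnorm (z - vec n x) < d \<longrightarrow> vnorm (F z - F (vec n x)) < e"
      using e by blast
    define A where "A = {z::nat\<Rightarrow>real. \<forall>j<n. \<bar>z j - x j\<bar> < d / (n + 1)}"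
    have "open A" unfolding A_def by (rule box_open)
    moreover have "x \<in> A" unfolding A_def using d by simp
    moreover have "G' \<in> B" if "y \<in> E" "y \<in> A" "G' = F (vec n y) $ i" for y G'
    proof -
      have "vnorm (vec n y - vec n x) \<le> real n * (d / (n + 1))"
        by (rule vnorm_vec_box) (use that d in \<open>auto simp: A_def\<close>)
      also have "\<dots> < d" using d by (simp add: field_simps)
      finally have "vnorm (F (vec n y) - F (vec n x)) < e" using d by auto
      moreover have "\<bar>(F (vec n y) - F (vec n x)) $ i\<bar> \<le> vnorm (F (vec n y) - F (vec n x))"
        by (rule vnorm_comp) (use Fvec[of x] i in auto)
      ultimately have "\<bar>F (vec n y) $ i - F (vec n x) $ i\<bar> < e" using Fvec[of x] Fvec[of y] i by auto
      then have "G' \<in> ball (F (vec n x) $ i) e" using that by (simp add: dist_real_def abs_minus_commute)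
      then show ?thesis using e by auto
    qed
    ultimately show "\<exists>A. open A \<and> x \<in> A \<and> (\<forall>y\<in>E. y \<in> A \<longrightarrow> F (vec n y) $ i \<in> B)" by blast
  qed
  have cmG: "continuous_map (Euclidean_space n) (Euclidean_space n) G"
    unfolding G_def continuous_map_componentwise_Euclidean_space
    using compcont by (simp add: continuous_map_Euclidean_space_iff E_def)
  have injG: "inj_on G E"
  proof
    fix x y assume x: "x \<in> E" and y: "y \<in> E" and eq: "G x = G y"
    have "F (vec n x) = F (vec n y)"
    proof (rule eq_vecI)
      fix i assume "i < dim_vec (F (vec n y))"
      then have "i < n" using Fvec[of y] by auto
      then show "F (vec n x) $ i = F (vec n y) $ i" using fun_cong[OF eq, of i] unfolding G_def by simp
    qed (use Fvec[of x] Fvec[of y] in auto)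
    moreover have "c * vnorm (vec n x - vec n y) \<le> vnorm (F (vec n x) - F (vec n y))"
      using low by simp
    ultimately have "c * vnorm (vec n x - vec n y) \<le> vnorm (F (vec n y) - F (vec n y))"
      by simp
    also have "F (vec n y) - F (vec n y) = 0\<^sub>v n" by (rule minus_cancel_vec[OF Fvec])
    finally have "c * vnorm (vec n x - vec n y) \<le> 0" by simp
    then have "vnorm (vec n x - vec n y) \<le> 0" using c by (simp add: mult_le_0_iff)
    then have "\<bar>(vec n x - vec n y) $ i\<bar> \<le> 0" if "i < n" for i using vnorm_comp[of i "vec n x - vec n y"] that by auto
    then have "x i = y i" if "i < n" for i using that by auto
    moreover have "x i = y i" if "\<not> i < n" for i using x y that E by auto
    ultimately show "x = y" by blast
  qed
  have open_img: "openin (Euclidean_space n) (G ` E)"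
    by (rule invariance_of_domain_Euclidean_space) (use cmG injG in \<open>auto simp: E_def\<close>)
  have img_sub: "G ` E \<subseteq> E" unfolding G_def E by auto
  have closed_img: "closed (G ` E)"
    unfolding closed_def
  proof (subst open_subopen, intro ballI)
    fix y assume y: "y \<in> - (G ` E)"
    show "\<exists>T. open T \<and> y \<in> T \<and> T \<subseteq> - G ` E"
    proof (cases "y \<in> E")
      case False
      have "closed E" unfolding E_def by (rule closedin_Euclidean_imp_closed) auto
      then show ?thesis using False img_sub by (intro exI[of _ "- E"]) (auto simp: closed_def)
    next
      case True
      have yc: "vec n y \<in> carrier_vec n" by simp
      have "\<not> (\<exists>v\<in>carrier_vec n. F v = vec n y)"
      proof
        assume "\<exists>v\<in>carrier_vec n. F v = vec n y"
        then obtain v where v: "v \<in> carrier_vec n" "F v = vec n y" by blast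
        define x where "x = (\<lambda>i. if i < n then v $ i else 0)"
        have xE: "x \<in> E" unfolding x_def E by auto
        have "vec n x = v" using v by (intro eq_vecI) (auto simp: x_def)
        then have "G x = y" unfolding G_def using v True E by (auto simp: fun_eq_iff)
        with xE y show False by auto
      qed
      then obtain d where d: "d > 0" "\<forall>v\<in>carrier_vec n. \<not> vnorm (F v - vec n y) < d"
        using approx_attained[OF F cont c low yc] by blast
      define T where "T = {z::nat\<Rightarrow>real. \<forall>j<n. \<bar>z j - y j\<bar> < d / (n + 1)}"
      have "open T" unfolding T_def by (rule box_open)
      moreover have "y \<in> T" unfolding T_def using d by simp
      moreover have "T \<subseteq> - G ` E"
      proof
        fix z assume z: "z \<in> T"
        show "z \<in> - G ` E"
        proof
          assume "z \<in> G ` E"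
          then obtain x where x: "x \<in> E" "z = G x" by blast
          have "vnorm (vec n (G x) - vec n y) \<le> real n * (d / (n + 1))"
            by (rule vnorm_vec_box) (use z x d in \<open>auto simp: T_def\<close>)
          also have "\<dots> < d" using d by (simp add: field_simps)
          finally have "vnorm (vec n (G x) - vec n y) < d" .
          moreover have "vec n (G x) = F (vec n x)" using Fvec[of x] by (intro eq_vecI) (auto simp: G_def)
          ultimately show False using d(2) by auto
        qed
      qed
      ultimately show ?thesis by blast
    qed
  qed
  have clo: "closedin (Euclidean_space n) (G ` E)"
    using closed_img img_sub by (simp add: closedin_Euclidean_space_iff E_def)
  have conn: "\<forall>T. openin (Euclidean_space n) T \<and> closedin (Euclidean_space n) T \<longrightarrow> T = {} \<or> T = E"
    using connected_Euclidean_space[of n] unfolding connected_space_clopen_in E_def .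
  have "G ` E = {} \<or> G ` E = E" by (rule conn[rule_format]) (use open_img clo in simp)
  moreover have "(\<lambda>i. 0) \<in> E" unfolding E by simp
  ultimately have GE: "G ` E = E" by (metis empty_iff image_is_empty)
  show ?thesis
  proof
    show "F ` carrier_vec n \<subseteq> carrier_vec n" using F by auto
    show "carrier_vec n \<subseteq> F ` carrier_vec n"
    proof
      fix v :: "real vec" assume v: "v \<in> carrier_vec n"
      define y where "y = (\<lambda>i. if i < n then v $ i else 0)"
      have "y \<in> E" unfolding y_def E by auto
      then have "y \<in> G ` E" using GE by simp
      then obtain x where x: "x \<in> E" "G x = y" by (elim imageE) simp
      have "F (vec n x) = v"
      proof (rule eq_vecI)
        fix i assume "i < dim_vec v"
        then have "i < n" using v by auto
        then show "F (vec n x) $ i = v $ i" using fun_cong[OF x(2), of i] unfolding G_def y_def by simp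
      qed (use Fvec v in auto)
      moreover have "vec n x \<in> carrier_vec n" by simp
      ultimately show "v \<in> F ` carrier_vec n" by (rule_tac image_eqI) auto
    qed
  qed
qed



lemma det_bound:
  fixes A :: "real mat"
  assumes A: "A \<in> carrier_mat n n" and L: "\<forall>i<n. \<forall>j<n. \<bar>A $$ (i,j)\<bar> \<le> L"
  shows "\<bar>Determinant.det A\<bar> \<le> fact n * L ^ n"
proof -
  let ?P = "{p. p permutes {0..<n}}"
  have fin: "finite ?P" by (rule finite_permutations) simp
  define f where "f p = signof p * (\<Prod>i = 0..<n. A $$ (i, p i))" for p
  have "\<bar>Determinant.det A\<bar> = \<bar>sum f ?P\<bar>"
    using det_def'[OF A] unfolding f_def by simp
  also have "\<dots> \<le> (\<Sum>p\<in>?P. \<bar>f p\<bar>)" by (rule sum_abs)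
  also have "\<dots> \<le> (\<Sum>p\<in>?P. L ^ n)"
  proof (rule sum_mono)
    fix p assume p: "p \<in> ?P"
    have "\<bar>f p\<bar> = (\<Prod>i = 0..<n. \<bar>A $$ (i, p i)\<bar>)"
      by (simp add: f_def abs_mult abs_prod sign_def)
    also have "\<dots> \<le> (\<Prod>i = 0..<n. L)"
    proof (rule prod_mono)
      fix i assume i: "i \<in> {0..<n}"
      have "p i \<in> {0..<n}" using p i by (auto dest: permutes_in_image)
      then show "0 \<le> \<bar>A $$ (i, p i)\<bar> \<and> \<bar>A $$ (i, p i)\<bar> \<le> L" using L i by auto
    qed
    finally show "\<bar>f p\<bar> \<le> L ^ n" by simp
  qed
  also have "\<dots> = fact n * L ^ n" using card_permutations[of "{0..<n}" n] by simp
  finally show ?thesis .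
qed

lemma adj_bound:
  fixes A :: "real mat"
  assumes A: "A \<in> carrier_mat n n" and L: "\<forall>i<n. \<forall>j<n. \<bar>A $$ (i,j)\<bar> \<le> L"
  shows "mabs (adj_mat A) \<le> real (n * n) * (fact (n - 1) * L ^ (n - 1))"
proof -
  have ent: "\<bar>adj_mat A $$ (i,j)\<bar> \<le> fact (n - 1) * L ^ (n - 1)" if ij: "i < n" "j < n" for i j
  proof -
    have "adj_mat A $$ (i,j) = cofactor A j i" using A ij by (simp add: adj_mat_def)
    also have "\<dots> = (- 1) ^ (j + i) * Determinant.det (mat_delete A j i)" by (simp add: cofactor_def)
    finally have "\<bar>adj_mat A $$ (i,j)\<bar> = \<bar>Determinant.det (mat_delete A j i)\<bar>"
      by (simp add: abs_mult)
    also have "\<dots> \<le> fact (n - 1) * L ^ (n - 1)"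
    proof (rule det_bound)
      show "mat_delete A j i \<in> carrier_mat (n - 1) (n - 1)" using A by (simp add: mat_delete_def)
      show "\<forall>i'<n - 1. \<forall>j'<n - 1. \<bar>mat_delete A j i $$ (i', j')\<bar> \<le> L"
        using A L by (auto simp: mat_delete_def)
    qed
    finally show ?thesis .
  qed
  have "mabs (adj_mat A) = (\<Sum>i<n. \<Sum>j<n. \<bar>adj_mat A $$ (i,j)\<bar>)"
    using A by (simp add: mabs_def adj_mat_def)
  also have "\<dots> \<le> (\<Sum>i<n. \<Sum>j<n. fact (n - 1) * L ^ (n - 1))"
    by (intro sum_mono ent) auto
  finally show ?thesis by simp
qed

lemma det_lower_vnorm:
  assumes A: "A \<in> carrier_mat n n" and s: "s \<in> carrier_vec n"
  shows "\<bar>Determinant.det A\<bar> * vnorm s \<le> mabs (adj_mat A) * vnorm (A *\<^sub>v s)"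
proof -
  have "adj_mat A *\<^sub>v (A *\<^sub>v s) = (adj_mat A * A) *\<^sub>v s"
    using adj_mat(1)[OF A] A s by (simp add: assoc_mult_mat_vec)
  also have "\<dots> = (Determinant.det A \<cdot>\<^sub>m 1\<^sub>m n) *\<^sub>v s" using adj_mat(3)[OF A] by simp
  also have "\<dots> = Determinant.det A \<cdot>\<^sub>v s"
  proof (rule eq_vecI)
    fix i assume i: "i < dim_vec (Determinant.det A \<cdot>\<^sub>v s)"
    then have i': "i < n" using s by auto
    have "((Determinant.det A \<cdot>\<^sub>m 1\<^sub>m n) *\<^sub>v s) $ i = (\<Sum>j = 0..<n. Determinant.det A * (if j = i then 1 else 0) * s $ j)"
      using i' s by (auto simp: scalar_prod_def)
    also have "\<dots> = (\<Sum>j\<in>{0..<n}. if j = i then Determinant.det A * s $ j else 0)"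
      by (rule sum.cong) auto
    also have "\<dots> = Determinant.det A * s $ i" using i' by simp
    finally show "((Determinant.det A \<cdot>\<^sub>m 1\<^sub>m n) *\<^sub>v s) $ i = (Determinant.det A \<cdot>\<^sub>v s) $ i"
      using i by simp
  qed (use s in auto)
  finally have eq: "adj_mat A *\<^sub>v (A *\<^sub>v s) = Determinant.det A \<cdot>\<^sub>v s" .
  have "\<bar>Determinant.det A\<bar> * vnorm s = vnorm (adj_mat A *\<^sub>v (A *\<^sub>v s))" by (simp add: eq vnorm_smult)
  also have "\<dots> \<le> mabs (adj_mat A) * vnorm (A *\<^sub>v s)"
    by (rule vnorm_mult_le) (use A adj_mat(1)[OF A] in auto)
  finally show ?thesis .
qed

lemma prod_one_minus_bound:
  assumes "\<forall>a\<in>set as. norm (a::complex) \<le> rho" "rho < 1"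
  shows "(1 - rho) ^ length as \<le> norm (prod_list (map (\<lambda>a. 1 - a) as))"
  using assms
proof (induction as)
  case Nil
  then show ?case by simp
next
  case (Cons a as)
  have "1 - rho \<le> 1 - norm a" using Cons by auto
  also have "1 - norm a \<le> norm (1 - a)" using norm_triangle_ineq2[of 1 a] by simp
  finally have h: "1 - rho \<le> norm (1 - a)" .
  have "(1 - rho) ^ length (a # as) = (1 - rho) * (1 - rho) ^ length as" by simp
  also have "\<dots> \<le> norm (1 - a) * norm (prod_list (map (\<lambda>a. 1 - a) as))"
    using Cons by (intro mult_mono h) auto
  finally show ?case by (simp add: norm_mult)
qed

lemma poly_prod_factors: "poly (\<Prod>a\<leftarrow>as. [:- a, 1:]) (1::complex) = prod_list (map (\<lambda>a. 1 - a) as)"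
  by (induction as) (auto simp: algebra_simps)

lemma det_lower_sprad:
  fixes A :: "real mat"
  assumes A: "A \<in> carrier_mat n n" and sp: "sprad (1\<^sub>m n + A) \<le> rho" and rho: "rho < 1"
  shows "(1 - rho) ^ n \<le> \<bar>Determinant.det A\<bar>"
proof (cases "n = 0")
  case True
  then have "Determinant.det A = 1" using A by (simp add: det_def)
  then show ?thesis using True by simp
next
  case False
  then have n: "n > 0" by simp
  define M where "M = 1\<^sub>m n + A"
  have M: "M \<in> carrier_mat n n" unfolding M_def using A by simp
  define B where "B = map_mat complex_of_real M"
  have B: "B \<in> carrier_mat n n" unfolding B_def using M by simp
  obtain as where as: "char_poly B = (\<Prod>a\<leftarrow>as. [:- a, 1:])" "length as = n"
    using char_poly_factorized[OF B] by blast
  have sprB: "spectral_radius B \<le> rho" using sp n M A unfolding sprad_def M_def B_def by simp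
  have roots: "norm a \<le> rho" if a: "a \<in> set as" for a
  proof -
    have "poly (char_poly B) a = 0" unfolding as(1) poly_prod_list prod_list_zero_iff
      using a by auto
    then have "eigenvalue B a" using eigenvalue_root_char_poly[OF B] by simp
    then have "norm a \<le> spectral_radius B" using spectral_radius_mem_max(2)[OF B n]
      by (simp add: spectrum_def)
    then show ?thesis using sprB by simp
  qed
  have "poly (char_poly B) 1 = Determinant.det (- char_matrix B 1)" by (rule char_poly_matrix[OF B])
  also have "- char_matrix B 1 = (-1) \<cdot>\<^sub>m map_mat complex_of_real A"
    by (rule eq_matI) (use A B in \<open>auto simp: char_matrix_def B_def M_def\<close>)
  also have "Determinant.det \<dots> = (-1) ^ n * complex_of_real (Determinant.det A)"
    using A by (simp add: det_smult of_real_hom.hom_det)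
  finally have "norm (poly (char_poly B) 1) = \<bar>Determinant.det A\<bar>"
    by (simp add: norm_mult norm_power)
  moreover have "poly (char_poly B) 1 = prod_list (map (\<lambda>a. 1 - a) as)"
    using as(1) poly_prod_factors by simp
  moreover have "(1 - rho) ^ n \<le> norm (prod_list (map (\<lambda>a. 1 - a) as))"
    using prod_one_minus_bound[of as rho] roots rho as(2) by auto
  ultimately show ?thesis by simp
qed



lemma jsr_ge_sprad:
  fixes M :: "real mat"
  assumes AA: "AA \<subseteq> carrier_mat N N" and M: "M \<in> AA"
  shows "ereal (sprad M) \<le> jsr N AA"
proof -
  have MN: "M \<in> carrier_mat N N" using AA M by auto
  define P where "P t = foldr (*) (replicate t M) (1\<^sub>m N)" for t
  have Pc: "P t \<in> carrier_mat N N" for t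
    by (induction t) (use MN in \<open>auto simp: P_def\<close>)
  have PS: "P (Suc t) = M * P t" for t by (simp add: P_def)
  have sp0: "sprad M \<ge> 0"
  proof (cases "N = 0")
    case True then show ?thesis using MN by (simp add: sprad_def)
  next
    case False
    then have "spectral_radius (map_mat complex_of_real M) \<in> norm ` spectrum (map_mat complex_of_real M)"
      using spectral_radius_mem_max(1)[of "map_mat complex_of_real M" N] MN by simp
    then show ?thesis using MN False by (auto simp: sprad_def)
  qed
  have key: "sprad M \<le> root t (sprad (P t))" if t: "t > 0" for t
  proof (cases "N = 0")
    case True
    then show ?thesis using MN Pc[of t] by (simp add: sprad_def)
  next
    case False
    then have N: "N > 0" by simp
    let ?MC = "map_mat complex_of_real M"
    have MC: "?MC \<in> carrier_mat N N" using MN by simp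
    obtain lam where lam: "lam \<in> spectrum ?MC" "norm lam = spectral_radius ?MC"
      using spectral_radius_mem_max(1)[OF MC N] by auto
    obtain v where v: "eigenvector ?MC v lam" using lam(1) unfolding spectrum_def eigenvalue_def by auto
    have vc: "v \<in> carrier_vec N" using v MC unfolding eigenvector_def by auto
    have Mv: "?MC *\<^sub>v v = lam \<cdot>\<^sub>v v" using v unfolding eigenvector_def by auto
    have pow: "map_mat complex_of_real (P s) *\<^sub>v v = lam ^ s \<cdot>\<^sub>v v" for s
    proof (induction s)
      case 0
      then show ?case using vc by (simp add: P_def of_real_hom.mat_hom_one)
    next
      case (Suc s)
      have "map_mat complex_of_real (P (Suc s)) *\<^sub>v v = (?MC * map_mat complex_of_real (P s)) *\<^sub>v v"
        unfolding PS using MN Pc[of s] by (simp add: of_real_hom.mat_hom_mult)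
      also have "\<dots> = ?MC *\<^sub>v (map_mat complex_of_real (P s) *\<^sub>v v)"
        using MN Pc[of s] vc by (simp add: assoc_mult_mat_vec)
      also have "\<dots> = ?MC *\<^sub>v (lam ^ s \<cdot>\<^sub>v v)" by (simp add: Suc)
      also have "\<dots> = lam ^ s \<cdot>\<^sub>v (?MC *\<^sub>v v)" using MC vc by (rule mult_mat_vec)
      also have "\<dots> = lam ^ Suc s \<cdot>\<^sub>v v" by (simp add: Mv smult_smult_assoc mult.commute)
      finally show ?case .
    qed
    have PC: "map_mat complex_of_real (P t) \<in> carrier_mat N N" using Pc by simp
    have "eigenvector (map_mat complex_of_real (P t)) v (lam ^ t)"
      using v pow[of t] Pc[of t] MN unfolding eigenvector_def by auto
    then have "lam ^ t \<in> spectrum (map_mat complex_of_real (P t))"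
      unfolding spectrum_def eigenvalue_def by auto
    then have "norm (lam ^ t) \<le> spectral_radius (map_mat complex_of_real (P t))"
      using spectral_radius_mem_max(2)[OF PC N] by auto
    then have "(sprad M) ^ t \<le> sprad (P t)"
      using lam(2) MN Pc[of t] N by (simp add: sprad_def norm_power)
    then have "root t ((sprad M) ^ t) \<le> root t (sprad (P t))" using t by simp
    then show ?thesis using t sp0 by (simp add: real_root_pos2)
  qed
  have "ereal (sprad M) \<le> limsup (\<lambda>t. Sup ((\<lambda>Ms. ereal (root t (sprad (foldr (*) Ms (1\<^sub>m N)))))
                          ` {Ms. length Ms = t \<and> set Ms \<subseteq> AA}))"
  proof (rule le_Limsup[OF trivial_limit_sequentially])
    show "\<forall>\<^sub>F t in sequentially. ereal (sprad M) \<le> Sup ((\<lambda>Ms. ereal (root t (sprad (foldr (*) Ms (1\<^sub>m N)))))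
                          ` {Ms. length Ms = t \<and> set Ms \<subseteq> AA})"
      unfolding eventually_sequentially
    proof (intro exI[of _ 1] allI impI)
      fix t :: nat assume t: "1 \<le> t"
      have mem: "replicate t M \<in> {Ms. length Ms = t \<and> set Ms \<subseteq> AA}" using M by auto
      have "ereal (sprad M) \<le> ereal (root t (sprad (P t)))" using key t by simp
      also have "\<dots> \<le> Sup ((\<lambda>Ms. ereal (root t (sprad (foldr (*) Ms (1\<^sub>m N)))))
                          ` {Ms. length Ms = t \<and> set Ms \<subseteq> AA})"
        by (rule Sup_upper, rule image_eqI[OF _ mem]) (simp add: P_def)
      finally show "ereal (sprad M) \<le> Sup ((\<lambda>Ms. ereal (root t (sprad (foldr (*) Ms (1\<^sub>m N)))))
                          ` {Ms. length Ms = t \<and> set Ms \<subseteq> AA})" .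
    qed
  qed
  then show ?thesis unfolding jsr_def .
qed



lemma mat_unit_entry:
  fixes A :: "real mat"
  assumes A: "A \<in> carrier_mat m n" and i: "i < m" and j: "j < n"
  shows "(A *\<^sub>v unit_vec n j) $ i = A $$ (i,j)"
  using A i j by simp

lemma vnorm_unit: "j < n \<Longrightarrow> vnorm (unit_vec n j :: real vec) = 1"
proof -
  assume j: "j < n"
  have "(unit_vec n j :: real vec) \<bullet> unit_vec n j = 1" using j by simp
  then show ?thesis unfolding vnorm_def by simp
qed

definition lbconst :: "nat \<Rightarrow> real \<Rightarrow> real \<Rightarrow> real" where
  "lbconst N L rho = (1 - rho) ^ N / (real (N * N) * (fact (N - 1) * L ^ (N - 1)) + 1)"

lemma lbconst_pos: "L \<ge> 0 \<Longrightarrow> rho < 1 \<Longrightarrow> lbconst N L rho > 0"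
  unfolding lbconst_def by (intro divide_pos_pos) (auto intro!: add_nonneg_pos mult_nonneg_nonneg)

lemma lower_bound_A:
  fixes A :: "real mat"
  assumes A: "A \<in> carrier_mat N N" and L: "\<forall>i<N. \<forall>j<N. \<bar>A $$ (i,j)\<bar> \<le> L" and L0: "L \<ge> 0"
    and sp: "sprad (1\<^sub>m N + A) \<le> rho" and rho: "rho < 1" and s: "s \<in> carrier_vec N"
  shows "lbconst N L rho * vnorm s \<le> vnorm (A *\<^sub>v s)"
proof -
  define D where "D = (1 - rho) ^ N"
  define Ba where "Ba = real (N * N) * (fact (N - 1) * L ^ (N - 1))"
  have D: "D > 0" unfolding D_def using rho by simp
  have Ba: "Ba \<ge> 0" unfolding Ba_def using L0 by simp
  have "D * vnorm s \<le> \<bar>Determinant.det A\<bar> * vnorm s"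
    unfolding D_def by (rule mult_right_mono[OF det_lower_sprad[OF A sp rho] vnorm_nonneg])
  also have "\<dots> \<le> mabs (adj_mat A) * vnorm (A *\<^sub>v s)" by (rule det_lower_vnorm[OF A s])
  also have "\<dots> \<le> Ba * vnorm (A *\<^sub>v s)"
    unfolding Ba_def by (rule mult_right_mono[OF adj_bound[OF A L] vnorm_nonneg])
  finally have h: "D * vnorm s \<le> Ba * vnorm (A *\<^sub>v s)" .
  have "lbconst N L rho * vnorm s = D * vnorm s / (Ba + 1)" unfolding lbconst_def D_def Ba_def by simp
  also have "\<dots> \<le> Ba * vnorm (A *\<^sub>v s) / (Ba + 1)" using h Ba by (simp add: divide_right_mono)
  also have "\<dots> \<le> vnorm (A *\<^sub>v s)"
    using Ba vnorm_nonneg[of "A *\<^sub>v s"] by (simp add: divide_le_eq algebra_simps)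
  finally show ?thesis .
qed

lemma beta_lower:
  fixes beta bA :: "real mat"
  assumes bA: "bA \<in> carrier_mat K N" and beta: "beta \<in> carrier_mat K N"
    and nb: "mnorm beta \<le> bbar"
    and sp: "sprad (1\<^sub>m N + transpose_mat beta * bA) \<le> rho" and rho: "rho < 1"
    and s: "s \<in> carrier_vec N"
  shows "lbconst N (bbar * mabs bA) rho * vnorm s \<le> vnorm (transpose_mat beta *\<^sub>v (bA *\<^sub>v s))"
proof -
  define A where "A = transpose_mat beta * bA"
  have A: "A \<in> carrier_mat N N" unfolding A_def using beta bA by simp
  have b0: "bbar \<ge> 0" using mnorm_nonneg[OF beta] nb by simp
  have L: "\<forall>i<N. \<forall>j<N. \<bar>A $$ (i,j)\<bar> \<le> bbar * mabs bA"
  proof (intro allI impI)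
    fix i j assume ij: "i < N" "j < N"
    have "\<bar>A $$ (i,j)\<bar> = \<bar>(A *\<^sub>v unit_vec N j) $ i\<bar>" using A ij by simp
    also have "\<dots> \<le> vnorm (A *\<^sub>v unit_vec N j)" by (rule vnorm_comp) (use A ij in simp)
    also have "A *\<^sub>v unit_vec N j = transpose_mat beta *\<^sub>v (bA *\<^sub>v unit_vec N j)"
      unfolding A_def using beta bA by (simp add: assoc_mult_mat_vec)
    also have "vnorm \<dots> \<le> mnorm beta * vnorm (bA *\<^sub>v unit_vec N j)"
      by (rule mnorm_transpose_bound[OF beta]) (use bA in simp)
    also have "\<dots> \<le> bbar * (mabs bA * vnorm (unit_vec N j :: real vec))"
      by (intro mult_mono nb vnorm_mult_le b0 vnorm_nonneg) (use bA in simp)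
    also have "\<dots> = bbar * mabs bA" using ij by (simp add: vnorm_unit)
    finally show "\<bar>A $$ (i,j)\<bar> \<le> bbar * mabs bA" .
  qed
  have "lbconst N (bbar * mabs bA) rho * vnorm s \<le> vnorm (A *\<^sub>v s)"
    by (rule lower_bound_A[OF A L _ _ rho s]) (use b0 mabs_nonneg sp in \<open>auto simp: A_def\<close>)
  also have "A *\<^sub>v s = transpose_mat beta *\<^sub>v (bA *\<^sub>v s)"
    unfolding A_def using beta bA s by (simp add: assoc_mult_mat_vec)
  finally show ?thesis .
qed



lemma divmod_eq_iff:
  fixes a b p :: nat assumes "p > 0"
  shows "(a mod p = b mod p \<and> a div p = b div p) \<longleftrightarrow> a = b"
  by (metis div_mult_mod_eq)

lemma divmod_succ_iff:
  fixes a b p :: nat assumes p: "p > 0"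
  shows "(a mod p = b mod p \<and> b div p = a div p + 1) \<longleftrightarrow> b = a + p"
proof
  assume h: "a mod p = b mod p \<and> b div p = a div p + 1"
  have "b = b div p * p + b mod p" by simp
  also have "\<dots> = (a div p + 1) * p + a mod p" using h by simp
  also have "\<dots> = a + p" by (simp add: algebra_simps)
  finally show "b = a + p" .
next
  assume "b = a + p"
  then show "a mod p = b mod p \<and> b div p = a div p + 1" using p by simp
qed

definition xi :: "nat \<Rightarrow> nat \<Rightarrow> real vec \<Rightarrow> real vec" where
  "xi p k d = vec (p * (k - 1)) (\<lambda>a. \<Sum>j\<in>{a div p..<k - 1}. d $ (j * p + a mod p))"

lemma Dmat_carrier: "Dmat p k \<in> carrier_mat (p * (k - 1)) (p * (k - 1))"
  unfolding Dmat_def by simp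

lemma Dmat_xi:
  assumes p: "p > 0" and d: "d \<in> carrier_vec (p * (k - 1))"
  shows "Dmat p k *\<^sub>v xi p k d = - d"
proof (rule eq_vecI)
  let ?P = "p * (k - 1)"
  let ?x = "xi p k d"
  fix a assume "a < dim_vec (- d)"
  then have a: "a < ?P" using d by simp
  have xi_rec: "?x $ a = d $ a + (if a + p < ?P then ?x $ (a + p) else 0)"
  proof -
    have q: "a div p < k - 1" using a p by (simp add: div_less_iff_less_mult mult.commute)
    have "{a div p..<k - 1} = insert (a div p) {Suc (a div p)..<k - 1}" using q by auto
    then have "?x $ a = d $ (a div p * p + a mod p) + (\<Sum>j\<in>{Suc (a div p)..<k - 1}. d $ (j * p + a mod p))"
      using a by (simp add: xi_def)
    also have "a div p * p + a mod p = a" by simp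
    also have "(\<Sum>j\<in>{Suc (a div p)..<k - 1}. d $ (j * p + a mod p)) = (if a + p < ?P then ?x $ (a + p) else 0)"
    proof (cases "a + p < ?P")
      case True
      have "(a + p) div p = Suc (a div p)" "(a + p) mod p = a mod p" using p by auto
      then show ?thesis using True by (simp add: xi_def)
    next
      case False
      have "k - 1 \<le> Suc (a div p)"
      proof (rule ccontr)
        assume "\<not> k - 1 \<le> Suc (a div p)"
        then have "Suc (Suc (a div p)) \<le> k - 1" by simp
        then have "p * Suc (Suc (a div p)) \<le> ?P" by (rule mult_le_mono2)
        moreover have "a + p < p * Suc (Suc (a div p))"
          using p by (simp add: algebra_simps) (metis div_mult_mod_eq mod_less_divisor add_less_mono1 mult.commute add.commute)
        ultimately show False using False by simp
      qed
      then show ?thesis using False by simp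
    qed
    finally show ?thesis .
  qed
  have "(Dmat p k *\<^sub>v ?x) $ a = (\<Sum>b = 0..<?P. Dmat p k $$ (a, b) * ?x $ b)"
    using a by (simp add: Dmat_def scalar_prod_def xi_def)
  also have "\<dots> = (\<Sum>b\<in>{0..<?P}. (if b = a then - ?x $ b else 0) + (if b = a + p then ?x $ b else 0))"
  proof (rule sum.cong[OF refl])
    fix b assume b: "b \<in> {0..<?P}"
    have e1: "(a mod p = b mod p \<and> a div p = b div p) \<longleftrightarrow> b = a" using divmod_eq_iff[OF p] by auto
    have e2: "(a mod p = b mod p \<and> b div p = a div p + 1) \<longleftrightarrow> b = a + p" by (rule divmod_succ_iff[OF p])
    have "Dmat p k $$ (a, b) = (if b = a then -1 else if b = a + p then 1 else 0)"
      using a b e1 e2 unfolding Dmat_def by auto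
    then show "Dmat p k $$ (a, b) * ?x $ b = (if b = a then - ?x $ b else 0) + (if b = a + p then ?x $ b else 0)"
      using p by auto
  qed
  also have "\<dots> = - ?x $ a + (if a + p < ?P then ?x $ (a + p) else 0)"
    using a by (simp add: sum.distrib)
  also have "\<dots> = (- d) $ a" using xi_rec a d by simp
  finally show "(Dmat p k *\<^sub>v ?x) $ a = (- d) $ a" .
qed (use d in \<open>simp add: Dmat_def\<close>)



lemma zero_mat_mult_vec: "v \<in> carrier_vec n \<Longrightarrow> (0\<^sub>m m n :: real mat) *\<^sub>v v = 0\<^sub>v m"
  by (intro eq_vecI) (auto simp: scalar_prod_def)

lemma vec_first_append: "v \<in> carrier_vec n \<Longrightarrow> vec_first (v @\<^sub>v w) n = v"
  by (intro eq_vecI) (auto simp: vec_first_def)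

definition Sfun :: "nat \<Rightarrow> nat \<Rightarrow> real vec \<Rightarrow> real vec" where
  "Sfun p k d = vec p (\<lambda>l. \<Sum>j<k - 1. d $ (j * p + l))"

lemma Etr_carrier: "Etr p k \<in> carrier_mat p (p * (k - 1))" unfolding Etr_def by simp

lemma Etr_xi:
  assumes p: "p > 0" and d: "d \<in> carrier_vec (p * (k - 1))"
  shows "Etr p k *\<^sub>v xi p k d = Sfun p k d"
proof (rule eq_vecI)
  fix i assume "i < dim_vec (Sfun p k d)"
  then have i: "i < p" by (simp add: Sfun_def)
  have "(Etr p k *\<^sub>v xi p k d) $ i = (\<Sum>j = 0..<p * (k - 1). (if i = j then 1 else 0) * xi p k d $ j)"
    using i by (simp add: Etr_def scalar_prod_def xi_def)
  also have "\<dots> = (\<Sum>j\<in>{0..<p * (k - 1)}. (if j = i then xi p k d $ j else 0))"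
    by (rule sum.cong) auto
  also have "\<dots> = (if i < p * (k - 1) then xi p k d $ i else 0)" by simp
  also have "\<dots> = Sfun p k d $ i"
  proof (cases "k - 1 = 0")
    case True
    then show ?thesis using i by (simp add: Sfun_def)
  next
    case False
    have "p * 1 \<le> p * (k - 1)" using False by (intro mult_le_mono2) simp
    then have "i < p * (k - 1)" using i by linarith
    moreover have "i div p = 0" "i mod p = i" using i by auto
    ultimately show ?thesis using i by (simp add: xi_def Sfun_def lessThan_atLeast0)
  qed
  finally show "(Etr p k *\<^sub>v xi p k d) $ i = Sfun p k d $ i" .
qed (simp add: Etr_def Sfun_def)

lemma bold_alpha_carrier:
  assumes "\<alpha> \<in> carrier_mat p r"
  shows "bold_alpha p k r \<alpha> \<in> carrier_mat (p + p * (k - 1)) (r + p * (k - 1))"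
  unfolding bold_alpha_def by (rule four_block_carrier_mat) (use assms in auto)

lemma bold_alpha_mult:
  assumes a: "\<alpha> \<in> carrier_mat p r" and y: "y \<in> carrier_vec r" and x: "x \<in> carrier_vec (p * (k - 1))"
  shows "bold_alpha p k r \<alpha> *\<^sub>v (y @\<^sub>v x) = (\<alpha> *\<^sub>v y + Etr p k *\<^sub>v x) @\<^sub>v x"
proof -
  have "bold_alpha p k r \<alpha> *\<^sub>v (y @\<^sub>v x) =
     (\<alpha> *\<^sub>v y + Etr p k *\<^sub>v x) @\<^sub>v (0\<^sub>m (p * (k - 1)) r *\<^sub>v y + 1\<^sub>m (p * (k - 1)) *\<^sub>v x)"
    unfolding bold_alpha_def by (rule four_block_mat_mult_vec[OF a Etr_carrier _ _ y x]) auto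
  also have "0\<^sub>m (p * (k - 1)) r *\<^sub>v y + 1\<^sub>m (p * (k - 1)) *\<^sub>v x = x"
    using x y by (simp add: zero_mat_mult_vec)
  finally show ?thesis .
qed

lemma D0_mult:
  assumes w: "w \<in> carrier_vec p" and x: "x \<in> carrier_vec (p * (k - 1))"
  shows "D0mat p k r *\<^sub>v (w @\<^sub>v x) = 0\<^sub>v r @\<^sub>v (Dmat p k *\<^sub>v x)"
proof -
  have "D0mat p k r *\<^sub>v (w @\<^sub>v x) =
     (0\<^sub>m r p *\<^sub>v w + 0\<^sub>m r (p * (k - 1)) *\<^sub>v x) @\<^sub>v (0\<^sub>m (p * (k - 1)) p *\<^sub>v w + Dmat p k *\<^sub>v x)"
    unfolding D0mat_def by (rule four_block_mat_mult_vec[OF _ _ _ Dmat_carrier w x]) auto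
  also have "\<dots> = 0\<^sub>v r @\<^sub>v (Dmat p k *\<^sub>v x)"
    using w x Dmat_carrier[of p k] by (simp add: zero_mat_mult_vec)
  finally show ?thesis .
qed

lemma D0_carrier: "D0mat p k r \<in> carrier_mat (r + p * (k - 1)) (p + p * (k - 1))"
  unfolding D0mat_def by (rule four_block_carrier_mat) (use Dmat_carrier[of p k] in auto)



lemma rank_inj:
  fixes A :: "real mat"
  assumes A: "A \<in> carrier_mat n m" and rk: "vec_space.rank n A = m"
    and x: "x \<in> carrier_vec m" and Ax: "A *\<^sub>v x = 0\<^sub>v n"
  shows "x = 0\<^sub>v m"
proof (rule ccontr)
  assume ne: "x \<noteq> 0\<^sub>v m"
  interpret vs: vec_space "TYPE(real)" n .
  show False
  proof (cases "distinct (cols A)")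
    case True
    from vs.full_rank_lin_indpt[OF A rk True] vs.lin_depI[OF A x ne Ax True] show False by simp
  next
    case False
    obtain S where S: "maximal S (\<lambda>T. T \<subseteq> set (cols A) \<and> vs.lin_indpt T)"
      using maximal_exists[of "(\<lambda>T. T \<subseteq> set (cols A) \<and> vs.lin_indpt T)" "card (set (cols A))" "{}"]
      by (meson List.finite_set card_mono empty_iff empty_subsetI vs.finite_lin_indpt2 rev_finite_subset)
    then have "card S \<le> card (set (cols A))" by (simp add: card_mono maximal_def)
    moreover have "card (set (cols A)) < m"
    proof -
      have "card (set (cols A)) \<le> length (cols A)" by (rule card_length)
      moreover have "card (set (cols A)) \<noteq> length (cols A)" using False card_distinct by blast
      ultimately show ?thesis using A by simp
    qed
    moreover have "vs.rank A = card S" by (rule vs.rank_card_indpt[OF A S])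
    ultimately show False using rk by simp
  qed
qed

lemma gram_ker:
  fixes A :: "real mat"
  assumes A: "A \<in> carrier_mat m n" and x: "x \<in> carrier_vec n"
    and h: "transpose_mat A *\<^sub>v (A *\<^sub>v x) = 0\<^sub>v n"
  shows "A *\<^sub>v x = 0\<^sub>v m"
proof -
  have "(transpose_mat A *\<^sub>v (A *\<^sub>v x)) \<bullet> x = (A *\<^sub>v x) \<bullet> (A *\<^sub>v x)"
    by (rule transpose_vec_mult_scalar[OF A x]) (use A x in simp)
  then have "(A *\<^sub>v x) \<bullet> (A *\<^sub>v x) = 0" using h x by simp
  then have "vnorm (A *\<^sub>v x) = 0" unfolding vnorm_def by simp
  then show ?thesis using vnorm_zero_iff[of "A *\<^sub>v x"] A by simp
qed

definition ginv :: "real mat \<Rightarrow> real mat" where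
  "ginv A = (1 / Determinant.det (transpose_mat A * A)) \<cdot>\<^sub>m adj_mat (transpose_mat A * A)"

lemma ginv:
  fixes A :: "real mat"
  assumes A: "A \<in> carrier_mat m n"
    and inj: "\<forall>x\<in>carrier_vec n. A *\<^sub>v x = 0\<^sub>v m \<longrightarrow> x = 0\<^sub>v n"
  shows "ginv A \<in> carrier_mat n n"
    "\<And>x. x \<in> carrier_vec n \<Longrightarrow> ginv A *\<^sub>v (transpose_mat A *\<^sub>v (A *\<^sub>v x)) = x"
proof -
  define G where "G = transpose_mat A * A"
  have G: "G \<in> carrier_mat n n" unfolding G_def using A by simp
  have "Determinant.det G \<noteq> 0"
  proof
    assume "Determinant.det G = 0"
    then obtain v where v: "v \<in> carrier_vec n" "v \<noteq> 0\<^sub>v n" "G *\<^sub>v v = 0\<^sub>v n"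
      using det_0_iff_vec_prod_zero_field[OF G] by blast
    have "transpose_mat A *\<^sub>v (A *\<^sub>v v) = 0\<^sub>v n" using v A unfolding G_def by (simp add: assoc_mult_mat_vec)
    then have "A *\<^sub>v v = 0\<^sub>v m" by (rule gram_ker[OF A v(1)])
    then show False using inj v by auto
  qed
  have "ginv A * G = (1 / Determinant.det G) \<cdot>\<^sub>m (adj_mat G * G)"
    unfolding ginv_def G_def[symmetric] using adj_mat[OF G] G
    by (simp add: mult_smult_assoc_mat[of _ n n _ n])
  also have "\<dots> = 1\<^sub>m n" using adj_mat(3)[OF G] \<open>Determinant.det G \<noteq> 0\<close> by (intro eq_matI) auto
  finally have inv: "ginv A * G = 1\<^sub>m n" .
  show "ginv A \<in> carrier_mat n n" unfolding ginv_def G_def[symmetric] using adj_mat(1)[OF G] by simp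
  fix x :: "real vec" assume x: "x \<in> carrier_vec n"
  have "ginv A *\<^sub>v (transpose_mat A *\<^sub>v (A *\<^sub>v x)) = ginv A *\<^sub>v (G *\<^sub>v x)"
    unfolding G_def using A x by (simp add: assoc_mult_mat_vec)
  also have "\<dots> = (ginv A * G) *\<^sub>v x"
    using x G \<open>ginv A \<in> carrier_mat n n\<close> by (simp add: assoc_mult_mat_vec)
  also have "\<dots> = x" using inv x by simp
  finally show "ginv A *\<^sub>v (transpose_mat A *\<^sub>v (A *\<^sub>v x)) = x" .
qed



lemma append_empty_vec: "w \<in> carrier_vec 0 \<Longrightarrow> v @\<^sub>v w = v"
  by (intro eq_vecI) auto

lemma smult_one_mat_vec:
  fixes v :: "real vec"
  assumes v: "v \<in> carrier_vec n"
  shows "(a \<cdot>\<^sub>m 1\<^sub>m n) *\<^sub>v v = a \<cdot>\<^sub>v v"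
proof (rule eq_vecI)
  fix i assume "i < dim_vec (a \<cdot>\<^sub>v v)"
  then have i: "i < n" using v by simp
  have "((a \<cdot>\<^sub>m 1\<^sub>m n) *\<^sub>v v) $ i = (\<Sum>j = 0..<n. a * (if j = i then 1 else 0) * v $ j)"
    using i v by (auto simp: scalar_prod_def)
  also have "\<dots> = (\<Sum>j\<in>{0..<n}. if j = i then a * v $ j else 0)"
    by (rule sum.cong) auto
  also have "\<dots> = a * v $ i" using i by simp
  finally show "((a \<cdot>\<^sub>m 1\<^sub>m n) *\<^sub>v v) $ i = (a \<cdot>\<^sub>v v) $ i" using i v by simp
qed (use v in simp)

lemma decomp:
  fixes \<alpha> ap :: "real mat"
  assumes a: "\<alpha> \<in> carrier_mat p r" and ap: "ap \<in> carrier_mat p (p - r)" and rp: "r \<le> p"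
    and apinj: "\<forall>x\<in>carrier_vec (p - r). ap *\<^sub>v x = 0\<^sub>v p \<longrightarrow> x = 0\<^sub>v (p - r)"
    and ainj: "\<forall>y\<in>carrier_vec r. \<alpha> *\<^sub>v y = 0\<^sub>v p \<longrightarrow> y = 0\<^sub>v r"
    and orth: "transpose_mat ap * \<alpha> = 0\<^sub>m (p - r) r"
    and u: "u \<in> carrier_vec p"
  shows "\<exists>x\<in>carrier_vec (p - r). \<exists>y\<in>carrier_vec r. u = ap *\<^sub>v x + \<alpha> *\<^sub>v y"
proof -
  define Q where "Q = four_block_mat ap \<alpha> (0\<^sub>m 0 (p - r)) (0\<^sub>m 0 r)"
  have Q0: "Q \<in> carrier_mat (p + 0) ((p - r) + r)" unfolding Q_def
    by (rule four_block_carrier_mat[OF ap]) simp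
  then have Q: "Q \<in> carrier_mat p p" using rp by simp
  have Qmult: "Q *\<^sub>v (x @\<^sub>v y) = ap *\<^sub>v x + \<alpha> *\<^sub>v y" if x: "x \<in> carrier_vec (p - r)" and y: "y \<in> carrier_vec r" for x y
  proof -
    have "Q *\<^sub>v (x @\<^sub>v y) = (ap *\<^sub>v x + \<alpha> *\<^sub>v y) @\<^sub>v (0\<^sub>m 0 (p - r) *\<^sub>v x + 0\<^sub>m 0 r *\<^sub>v y)"
      unfolding Q_def by (rule four_block_mat_mult_vec[OF ap a _ _ x y]) auto
    also have "\<dots> = ap *\<^sub>v x + \<alpha> *\<^sub>v y" by (rule append_empty_vec) (intro carrier_vecI, simp)
    finally show ?thesis .
  qed
  have split: "w = vec_first w (p - r) @\<^sub>v vec_last w r" if "w \<in> carrier_vec p" for w :: "real vec"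
    using that rp by (intro vec_first_last_append[symmetric]) simp
  have "Determinant.det Q \<noteq> 0"
  proof
    assume "Determinant.det Q = 0"
    then obtain w where w: "w \<in> carrier_vec p" "w \<noteq> 0\<^sub>v p" "Q *\<^sub>v w = 0\<^sub>v p"
      using det_0_iff_vec_prod_zero_field[OF Q] by blast
    define x where "x = vec_first w (p - r)"
    define y where "y = vec_last w r"
    have x: "x \<in> carrier_vec (p - r)" and y: "y \<in> carrier_vec r" unfolding x_def y_def by auto
    have w_eq: "w = x @\<^sub>v y" unfolding x_def y_def by (rule split[OF w(1)])
    have sum0: "ap *\<^sub>v x + \<alpha> *\<^sub>v y = 0\<^sub>v p" using w(3) Qmult[OF x y] w_eq by simp
    have "transpose_mat ap *\<^sub>v (ap *\<^sub>v x + \<alpha> *\<^sub>v y) = transpose_mat ap *\<^sub>v (ap *\<^sub>v x) + transpose_mat ap *\<^sub>v (\<alpha> *\<^sub>v y)"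
      by (rule mult_add_distrib_mat_vec[of _ "p - r" p]) (use ap a x y in auto)
    also have "transpose_mat ap *\<^sub>v (\<alpha> *\<^sub>v y) = (transpose_mat ap * \<alpha>) *\<^sub>v y"
      using ap a y by (simp add: assoc_mult_mat_vec)
    also have "\<dots> = 0\<^sub>v (p - r)" unfolding orth using y by (simp add: zero_mat_mult_vec)
    moreover have "transpose_mat ap *\<^sub>v 0\<^sub>v p = 0\<^sub>v (p - r)" using ap
      by (intro eq_vecI) (auto simp: scalar_prod_def)
    ultimately have "transpose_mat ap *\<^sub>v (ap *\<^sub>v x) = 0\<^sub>v (p - r)"
      using sum0 ap x by simp
    then have "ap *\<^sub>v x = 0\<^sub>v p" by (rule gram_ker[OF ap x])
    then have x0: "x = 0\<^sub>v (p - r)" using apinj x by auto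
    have "\<alpha> *\<^sub>v y = 0\<^sub>v p" using sum0 \<open>ap *\<^sub>v x = 0\<^sub>v p\<close> a y by simp
    then have y0: "y = 0\<^sub>v r" using ainj y by auto
    have "w = 0\<^sub>v p" using w_eq x0 y0 rp by (intro eq_vecI) auto
    with w(2) show False by simp
  qed
  define w where "w = (1 / Determinant.det Q) \<cdot>\<^sub>v (adj_mat Q *\<^sub>v u)"
  have au: "adj_mat Q *\<^sub>v u \<in> carrier_vec p" by (rule carrier_vecI) (use adj_mat(1)[OF Q] in simp)
  then have wc: "w \<in> carrier_vec p" unfolding w_def by simp
  have "Q *\<^sub>v w = (1 / Determinant.det Q) \<cdot>\<^sub>v (Q *\<^sub>v (adj_mat Q *\<^sub>v u))"
    unfolding w_def by (rule mult_mat_vec[OF Q au])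
  also have "Q *\<^sub>v (adj_mat Q *\<^sub>v u) = (Q * adj_mat Q) *\<^sub>v u"
    using Q adj_mat(1)[OF Q] u by (simp add: assoc_mult_mat_vec)
  also have "\<dots> = (Determinant.det Q \<cdot>\<^sub>m 1\<^sub>m p) *\<^sub>v u" using adj_mat(2)[OF Q] by simp
  also have "(1 / Determinant.det Q) \<cdot>\<^sub>v \<dots> = u"
    using u \<open>Determinant.det Q \<noteq> 0\<close> by (simp add: smult_one_mat_vec smult_smult_assoc)
  finally have Qw: "Q *\<^sub>v w = u" .
  define x where "x = vec_first w (p - r)"
  define y where "y = vec_last w r"
  have x: "x \<in> carrier_vec (p - r)" and y: "y \<in> carrier_vec r" unfolding x_def y_def by auto
  have "u = ap *\<^sub>v x + \<alpha> *\<^sub>v y" using Qw Qmult[OF x y] split[OF wc] unfolding x_def y_def by simp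
  then show ?thesis using x y by blast
qed



lemma append_minus:
  fixes a a' b b' :: "real vec"
  assumes "a \<in> carrier_vec n1" "a' \<in> carrier_vec n1" "b \<in> carrier_vec n2" "b' \<in> carrier_vec n2"
  shows "(a @\<^sub>v b) - (a' @\<^sub>v b') = (a - a') @\<^sub>v (b - b')"
  using assms by (intro eq_vecI) auto

lemma vnorm_append_zero: "vnorm (v @\<^sub>v 0\<^sub>v m) = vnorm v"
  unfolding vnorm_append by (simp add: vnorm_nonneg)

lemma idx_bound:
  fixes j l p k :: nat
  assumes "j < k - 1" "l < p"
  shows "j * p + l < p * (k - 1)"
proof -
  have "j * p + l < j * p + p" using assms by simp
  also have "\<dots> = Suc j * p" by simp
  also have "\<dots> \<le> (k - 1) * p" using assms by (intro mult_le_mono1) simp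
  finally show ?thesis by (simp add: mult.commute)
qed

lemma Sfun_carrier: "Sfun p k g \<in> carrier_vec p" unfolding Sfun_def by simp

lemma Sfun_minus:
  assumes g: "g \<in> carrier_vec (p * (k - 1))" and g': "g' \<in> carrier_vec (p * (k - 1))"
  shows "Sfun p k g - Sfun p k g' = Sfun p k (g - g')"
proof (rule eq_vecI)
  fix l assume "l < dim_vec (Sfun p k (g - g'))"
  then have l: "l < p" by (simp add: Sfun_def)
  have "(\<Sum>j<k - 1. g $ (j * p + l)) - (\<Sum>j<k - 1. g' $ (j * p + l)) = (\<Sum>j<k - 1. (g - g') $ (j * p + l))"
    unfolding sum_subtractf[symmetric] using g g' l idx_bound by (intro sum.cong) auto
  then show "(Sfun p k g - Sfun p k g') $ l = Sfun p k (g - g') $ l" using l by (simp add: Sfun_def)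
qed (simp add: Sfun_def)

lemma Sfun_bound:
  assumes g: "g \<in> carrier_vec (p * (k - 1))"
  shows "vnorm (Sfun p k g) \<le> real (p * (k - 1)) * vnorm g"
proof -
  have "vnorm (Sfun p k g) \<le> (\<Sum>l<p. \<bar>Sfun p k g $ l\<bar>)" using vnorm_le_sum[of "Sfun p k g"] by (simp add: Sfun_def)
  also have "\<dots> \<le> (\<Sum>l<p. \<Sum>j<k - 1. vnorm g)"
  proof (rule sum_mono)
    fix l assume l: "l \<in> {..<p}"
    have "\<bar>Sfun p k g $ l\<bar> = \<bar>\<Sum>j<k - 1. g $ (j * p + l)\<bar>" using l by (simp add: Sfun_def)
    also have "\<dots> \<le> (\<Sum>j<k - 1. \<bar>g $ (j * p + l)\<bar>)" by (rule sum_abs)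
    also have "\<dots> \<le> (\<Sum>j<k - 1. vnorm g)"
      by (rule sum_mono, rule vnorm_comp) (use g l idx_bound in auto)
    finally show "\<bar>Sfun p k g $ l\<bar> \<le> (\<Sum>j<k - 1. vnorm g)" .
  qed
  finally show ?thesis by (simp add: ac_simps)
qed

lemma Dmat_zero: "Dmat p k *\<^sub>v 0\<^sub>v (p * (k - 1)) = 0\<^sub>v (p * (k - 1))"
  by (intro eq_vecI) (auto simp: Dmat_def scalar_prod_def)

lemma Etr_zero: "Etr p k *\<^sub>v 0\<^sub>v (p * (k - 1)) = 0\<^sub>v p"
  by (intro eq_vecI) (auto simp: Etr_def scalar_prod_def)

lemma xi_carrier: "xi p k d \<in> carrier_vec (p * (k - 1))" unfolding xi_def by simp



lemma vnorm_minus_le: "dim_vec u = dim_vec v \<Longrightarrow> vnorm (u - v) \<le> vnorm u + vnorm v"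
proof -
  assume d: "dim_vec u = dim_vec v"
  have "u - v = u + (- v)" by (intro eq_vecI) (auto simp: d)
  then show ?thesis using vnorm_add[of u "- v"] d by (simp add: vnorm_uminus)
qed

definition Psi :: "nat \<Rightarrow> nat \<Rightarrow> real mat \<Rightarrow> (real vec \<Rightarrow> real vec) \<Rightarrow> (real vec \<Rightarrow> real vec) \<Rightarrow> real vec \<Rightarrow> real vec" where
  "Psi p k ap Th Gv w = (transpose_mat ap *\<^sub>v (w - Sfun p k (Gv w))) @\<^sub>v Th w"

definition cst_c :: "nat \<Rightarrow> nat \<Rightarrow> nat \<Rightarrow> real mat \<Rightarrow> real \<Rightarrow> real \<Rightarrow> real" where
  "cst_c p k r \<alpha> bbar rho = lbconst (r + p * (k - 1)) (bbar * mabs (bold_alpha p k r \<alpha>)) rho"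

definition Lu :: "nat \<Rightarrow> nat \<Rightarrow> real mat \<Rightarrow> real \<Rightarrow> real" where
  "Lu p k ap bbar = mabs (transpose_mat ap) * (1 + real (p * (k - 1)) * bbar) + bbar"

definition Cl :: "nat \<Rightarrow> nat \<Rightarrow> nat \<Rightarrow> real mat \<Rightarrow> real mat \<Rightarrow> real \<Rightarrow> real \<Rightarrow> real" where
  "Cl p k r \<alpha> ap bbar rho = mabs (bold_alpha p k r \<alpha>) * (1 + bbar * mabs ap * mabs (ginv ap)) / cst_c p k r \<alpha> bbar rho
     + mabs ap * mabs (ginv ap)"

definition hypB where
  "hypB p k r \<alpha> bbar rho Th Gv \<longleftrightarrow> (\<forall>z\<in>carrier_vec (p + p * (k - 1)). \<forall>z'\<in>carrier_vec (p + p * (k - 1)).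
     \<exists>\<beta>. \<beta> \<in> carrier_mat (p + p * (k - 1)) (r + p * (k - 1)) \<and> mnorm \<beta> \<le> bbar
       \<and> sprad (1\<^sub>m (r + p * (k - 1)) + transpose_mat \<beta> * bold_alpha p k r \<alpha>) \<le> rho
       \<and> (Th (vec_first z p) @\<^sub>v Gv (vec_first z p)) + D0mat p k r *\<^sub>v z
         - ((Th (vec_first z' p) @\<^sub>v Gv (vec_first z' p)) + D0mat p k r *\<^sub>v z')
         = transpose_mat \<beta> *\<^sub>v (z - z'))"

lemma core_zeta0:
  fixes \<alpha> :: "real mat"
  assumes hyp: "hypB p k r \<alpha> bbar rho Th Gv"
    and Thc: "\<forall>w\<in>carrier_vec p. Th w \<in> carrier_vec r"
    and Gvc: "\<forall>w\<in>carrier_vec p. Gv w \<in> carrier_vec (p * (k - 1))"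
    and w: "w \<in> carrier_vec p" and w': "w' \<in> carrier_vec p"
  shows "vnorm ((Th w - Th w') @\<^sub>v (Gv w - Gv w')) \<le> bbar * vnorm (w - w')"
proof -
  let ?P = "p * (k - 1)"
  define z where "z = w @\<^sub>v 0\<^sub>v ?P"
  define z' where "z' = w' @\<^sub>v 0\<^sub>v ?P"
  have z: "z \<in> carrier_vec (p + ?P)" "z' \<in> carrier_vec (p + ?P)" unfolding z_def z'_def using w w' by auto
  obtain \<beta> where \<beta>: "\<beta> \<in> carrier_mat (p + ?P) (r + ?P)" "mnorm \<beta> \<le> bbar"
    "(Th (vec_first z p) @\<^sub>v Gv (vec_first z p)) + D0mat p k r *\<^sub>v z
         - ((Th (vec_first z' p) @\<^sub>v Gv (vec_first z' p)) + D0mat p k r *\<^sub>v z')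
         = transpose_mat \<beta> *\<^sub>v (z - z')"
    using hyp z unfolding hypB_def by blast
  have fz: "vec_first z p = w" "vec_first z' p = w'" unfolding z_def z'_def using w w' by (auto simp: vec_first_append)
  have D0z: "D0mat p k r *\<^sub>v z = 0\<^sub>v r @\<^sub>v 0\<^sub>v ?P" "D0mat p k r *\<^sub>v z' = 0\<^sub>v r @\<^sub>v 0\<^sub>v ?P"
    unfolding z_def z'_def D0_mult[OF w zero_carrier_vec] D0_mult[OF w' zero_carrier_vec] Dmat_zero by auto
  have Tw: "Th w \<in> carrier_vec r" "Th w' \<in> carrier_vec r" "Gv w \<in> carrier_vec ?P" "Gv w' \<in> carrier_vec ?P"
    using Thc Gvc w w' by auto
  have lhs: "(Th w @\<^sub>v Gv w) + (0\<^sub>v r @\<^sub>v 0\<^sub>v ?P) - ((Th w' @\<^sub>v Gv w') + (0\<^sub>v r @\<^sub>v 0\<^sub>v ?P))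
      = (Th w - Th w') @\<^sub>v (Gv w - Gv w')"
    using Tw by (intro eq_vecI) auto
  have rhs: "z - z' = (w - w') @\<^sub>v 0\<^sub>v ?P" unfolding z_def z'_def using w w' by (intro eq_vecI) auto
  have "(Th w - Th w') @\<^sub>v (Gv w - Gv w') = transpose_mat \<beta> *\<^sub>v ((w - w') @\<^sub>v 0\<^sub>v ?P)"
    using \<beta>(3) unfolding fz D0z lhs rhs .
  then have "vnorm ((Th w - Th w') @\<^sub>v (Gv w - Gv w')) \<le> mnorm \<beta> * vnorm ((w - w') @\<^sub>v 0\<^sub>v ?P)"
    using mnorm_transpose_bound[OF \<beta>(1), of "(w - w') @\<^sub>v 0\<^sub>v ?P"] w w' by auto
  also have "\<dots> \<le> bbar * vnorm (w - w')"
    unfolding vnorm_append_zero by (rule mult_right_mono[OF \<beta>(2) vnorm_nonneg])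
  finally show ?thesis .
qed



lemma hypB_beta:
  assumes hyp: "hypB p k r \<alpha> bbar rho Th Gv"
  shows "\<exists>\<beta>. \<beta> \<in> carrier_mat (p + p * (k - 1)) (r + p * (k - 1)) \<and> mnorm \<beta> \<le> bbar
       \<and> sprad (1\<^sub>m (r + p * (k - 1)) + transpose_mat \<beta> * bold_alpha p k r \<alpha>) \<le> rho"
proof -
  have "0\<^sub>v (p + p * (k - 1)) \<in> carrier_vec (p + p * (k - 1))" by simp
  then show ?thesis using hyp unfolding hypB_def by blast
qed

lemma bbar_nonneg:
  assumes hyp: "hypB p k r \<alpha> bbar rho Th Gv"
  shows "bbar \<ge> 0"
proof -
  obtain \<beta> where b: "\<beta> \<in> carrier_mat (p + p * (k - 1)) (r + p * (k - 1))" "mnorm \<beta> \<le> bbar"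
    using hypB_beta[OF hyp] by blast
  show ?thesis using mnorm_nonneg[OF b(1)] b(2) by linarith
qed

lemma alpha_inj:
  fixes \<alpha> :: "real mat"
  assumes hyp: "hypB p k r \<alpha> bbar rho Th Gv" and a: "\<alpha> \<in> carrier_mat p r" and rho: "rho < 1"
    and y: "y \<in> carrier_vec r" and ay: "\<alpha> *\<^sub>v y = 0\<^sub>v p"
  shows "y = 0\<^sub>v r"
proof -
  let ?P = "p * (k - 1)"
  obtain \<beta> where \<beta>: "\<beta> \<in> carrier_mat (p + ?P) (r + ?P)" "mnorm \<beta> \<le> bbar"
       "sprad (1\<^sub>m (r + ?P) + transpose_mat \<beta> * bold_alpha p k r \<alpha>) \<le> rho"
    using hypB_beta[OF hyp] by blast
  have b0: "bbar \<ge> 0" by (rule bbar_nonneg[OF hyp])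
  have s: "y @\<^sub>v 0\<^sub>v ?P \<in> carrier_vec (r + ?P)" using y by simp
  have "bold_alpha p k r \<alpha> *\<^sub>v (y @\<^sub>v 0\<^sub>v ?P) = (\<alpha> *\<^sub>v y + Etr p k *\<^sub>v 0\<^sub>v ?P) @\<^sub>v 0\<^sub>v ?P"
    by (rule bold_alpha_mult[OF a y]) simp
  also have "\<dots> = 0\<^sub>v (p + ?P)" unfolding ay Etr_zero by (intro eq_vecI) auto
  finally have bz: "bold_alpha p k r \<alpha> *\<^sub>v (y @\<^sub>v 0\<^sub>v ?P) = 0\<^sub>v (p + ?P)" .
  have "lbconst (r + ?P) (bbar * mabs (bold_alpha p k r \<alpha>)) rho * vnorm (y @\<^sub>v 0\<^sub>v ?P)
      \<le> vnorm (transpose_mat \<beta> *\<^sub>v (bold_alpha p k r \<alpha> *\<^sub>v (y @\<^sub>v 0\<^sub>v ?P)))"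
    by (rule beta_lower[OF bold_alpha_carrier[OF a] \<beta>(1) \<beta>(2) \<beta>(3) rho s])
  also have "transpose_mat \<beta> *\<^sub>v (bold_alpha p k r \<alpha> *\<^sub>v (y @\<^sub>v 0\<^sub>v ?P)) = 0\<^sub>v (r + ?P)"
    unfolding bz using \<beta>(1) by (intro eq_vecI) (auto simp: scalar_prod_def)
  finally have "lbconst (r + ?P) (bbar * mabs (bold_alpha p k r \<alpha>)) rho * vnorm y \<le> 0"
    by (simp add: vnorm_append_zero)
  moreover have "lbconst (r + ?P) (bbar * mabs (bold_alpha p k r \<alpha>)) rho > 0"
    by (rule lbconst_pos) (use b0 mabs_nonneg rho in auto)
  ultimately have "vnorm y \<le> 0" by (simp add: mult_le_0_iff)
  then have "vnorm y = 0" using vnorm_nonneg[of y] by simp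
  then show ?thesis using vnorm_zero_iff[of y] y by simp
qed

lemma Psi_diff:
  fixes ap :: "real mat"
  assumes ap: "ap \<in> carrier_mat p (p - r)"
    and Thc: "\<forall>w\<in>carrier_vec p. Th w \<in> carrier_vec r"
    and Gvc: "\<forall>w\<in>carrier_vec p. Gv w \<in> carrier_vec (p * (k - 1))"
    and w: "w \<in> carrier_vec p" and w': "w' \<in> carrier_vec p"
  shows "Psi p k ap Th Gv w - Psi p k ap Th Gv w'
     = (transpose_mat ap *\<^sub>v ((w - w') - Sfun p k (Gv w - Gv w'))) @\<^sub>v (Th w - Th w')"
proof -
  have G: "Gv w \<in> carrier_vec (p * (k - 1))" "Gv w' \<in> carrier_vec (p * (k - 1))" using Gvc w w' by auto
  have T: "Th w \<in> carrier_vec r" "Th w' \<in> carrier_vec r" using Thc w w' by auto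
  have "transpose_mat ap *\<^sub>v (w - Sfun p k (Gv w)) - transpose_mat ap *\<^sub>v (w' - Sfun p k (Gv w'))
      = transpose_mat ap *\<^sub>v ((w - Sfun p k (Gv w)) - (w' - Sfun p k (Gv w')))"
    by (rule mult_minus_distrib_mat_vec[symmetric, of _ "p - r" p]) (use ap w w' Sfun_carrier in auto)
  also have "(w - Sfun p k (Gv w)) - (w' - Sfun p k (Gv w')) = (w - w') - (Sfun p k (Gv w) - Sfun p k (Gv w'))"
    using w w' Sfun_carrier[of p k "Gv w"] Sfun_carrier[of p k "Gv w'"] by (intro eq_vecI) auto
  also have "Sfun p k (Gv w) - Sfun p k (Gv w') = Sfun p k (Gv w - Gv w')" by (rule Sfun_minus[OF G])
  finally have e: "transpose_mat ap *\<^sub>v (w - Sfun p k (Gv w)) - transpose_mat ap *\<^sub>v (w' - Sfun p k (Gv w'))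
      = transpose_mat ap *\<^sub>v ((w - w') - Sfun p k (Gv w - Gv w'))" .
  have c: "transpose_mat ap *\<^sub>v (w - Sfun p k (Gv w)) \<in> carrier_vec (p - r)"
    "transpose_mat ap *\<^sub>v (w' - Sfun p k (Gv w')) \<in> carrier_vec (p - r)"
    using ap by (auto intro!: carrier_vecI)
  show ?thesis unfolding Psi_def append_minus[OF c T] e ..
qed



lemma core_upper:
  fixes \<alpha> ap :: "real mat"
  assumes hyp: "hypB p k r \<alpha> bbar rho Th Gv"
    and ap: "ap \<in> carrier_mat p (p - r)"
    and Thc: "\<forall>w\<in>carrier_vec p. Th w \<in> carrier_vec r"
    and Gvc: "\<forall>w\<in>carrier_vec p. Gv w \<in> carrier_vec (p * (k - 1))"
    and w: "w \<in> carrier_vec p" and w': "w' \<in> carrier_vec p"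
  shows "vnorm (Psi p k ap Th Gv w - Psi p k ap Th Gv w') \<le> Lu p k ap bbar * vnorm (w - w')"
proof -
  let ?P = "p * (k - 1)"
  define d where "d = w - w'"
  define \<eta> where "\<eta> = Th w - Th w'"
  define \<delta> where "\<delta> = Gv w - Gv w'"
  have d: "d \<in> carrier_vec p" unfolding d_def by (rule carrier_vecI) (use w' in simp)
  have \<delta>: "\<delta> \<in> carrier_vec ?P" unfolding \<delta>_def by (rule carrier_vecI) (use Gvc w' in simp)
  have b0: "bbar \<ge> 0" by (rule bbar_nonneg[OF hyp])
  have z0: "vnorm (\<eta> @\<^sub>v \<delta>) \<le> bbar * vnorm d"
    unfolding \<eta>_def \<delta>_def d_def by (rule core_zeta0[OF hyp Thc Gvc w w'])
  have eta: "vnorm \<eta> \<le> bbar * vnorm d" using z0 vnorm_append_ge1[of \<eta> \<delta>] by linarith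
  have del: "vnorm \<delta> \<le> bbar * vnorm d" using z0 vnorm_append_ge2[of \<delta> \<eta>] by linarith
  have S: "vnorm (Sfun p k \<delta>) \<le> real ?P * (bbar * vnorm d)"
    using Sfun_bound[OF \<delta>] del by (meson mult_left_mono of_nat_0_le_iff order_trans)
  have "vnorm (d - Sfun p k \<delta>) \<le> vnorm d + vnorm (Sfun p k \<delta>)"
    by (rule vnorm_minus_le) (use d Sfun_carrier[of p k \<delta>] in auto)
  also have "\<dots> \<le> (1 + real ?P * bbar) * vnorm d" using S by (simp add: algebra_simps)
  finally have ds: "vnorm (d - Sfun p k \<delta>) \<le> (1 + real ?P * bbar) * vnorm d" .
  have "vnorm (transpose_mat ap *\<^sub>v (d - Sfun p k \<delta>)) \<le> mabs (transpose_mat ap) * vnorm (d - Sfun p k \<delta>)"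
    by (rule vnorm_mult_le) (use ap d Sfun_carrier[of p k \<delta>] in auto)
  also have "\<dots> \<le> mabs (transpose_mat ap) * ((1 + real ?P * bbar) * vnorm d)"
    by (rule mult_left_mono[OF ds mabs_nonneg])
  finally have A1: "vnorm (transpose_mat ap *\<^sub>v (d - Sfun p k \<delta>)) \<le> mabs (transpose_mat ap) * (1 + real ?P * bbar) * vnorm d"
    by (simp add: ac_simps)
  have "vnorm (Psi p k ap Th Gv w - Psi p k ap Th Gv w') = vnorm ((transpose_mat ap *\<^sub>v (d - Sfun p k \<delta>)) @\<^sub>v \<eta>)"
    unfolding Psi_diff[OF ap Thc Gvc w w'] d_def \<delta>_def \<eta>_def ..
  also have "\<dots> \<le> vnorm (transpose_mat ap *\<^sub>v (d - Sfun p k \<delta>)) + vnorm \<eta>" by (rule vnorm_append_le)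
  also have "\<dots> \<le> mabs (transpose_mat ap) * (1 + real ?P * bbar) * vnorm d + bbar * vnorm d"
    using A1 eta by linarith
  also have "\<dots> = Lu p k ap bbar * vnorm d" unfolding Lu_def by (simp add: algebra_simps)
  finally show ?thesis unfolding d_def .
qed



lemma core_lower:
  fixes \<alpha> ap :: "real mat"
  assumes hyp: "hypB p k r \<alpha> bbar rho Th Gv" and p: "p > 0" and rp: "r \<le> p"
    and a: "\<alpha> \<in> carrier_mat p r" and ap: "ap \<in> carrier_mat p (p - r)"
    and apinj: "\<forall>x\<in>carrier_vec (p - r). ap *\<^sub>v x = 0\<^sub>v p \<longrightarrow> x = 0\<^sub>v (p - r)"
    and orth: "transpose_mat ap * \<alpha> = 0\<^sub>m (p - r) r" and rho: "rho < 1"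
    and Thc: "\<forall>w\<in>carrier_vec p. Th w \<in> carrier_vec r"
    and Gvc: "\<forall>w\<in>carrier_vec p. Gv w \<in> carrier_vec (p * (k - 1))"
    and w: "w \<in> carrier_vec p" and w': "w' \<in> carrier_vec p"
  shows "vnorm (w - w') \<le> Cl p k r \<alpha> ap bbar rho * vnorm (Psi p k ap Th Gv w - Psi p k ap Th Gv w')"
proof -
  let ?P = "p * (k - 1)"
  let ?bA = "bold_alpha p k r \<alpha>"
  have bA: "?bA \<in> carrier_mat (p + ?P) (r + ?P)" by (rule bold_alpha_carrier[OF a])
  define d where "d = w - w'"
  define \<eta> where "\<eta> = Th w - Th w'"
  define \<delta> where "\<delta> = Gv w - Gv w'"
  define \<xi> where "\<xi> = xi p k \<delta>"
  define S where "S = Sfun p k \<delta>"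
  have d: "d \<in> carrier_vec p" unfolding d_def by (rule carrier_vecI) (use w' in simp)
  have \<delta>: "\<delta> \<in> carrier_vec ?P" unfolding \<delta>_def by (rule carrier_vecI) (use Gvc w' in simp)
  have \<eta>: "\<eta> \<in> carrier_vec r" unfolding \<eta>_def by (rule carrier_vecI) (use Thc w' in simp)
  have \<xi>: "\<xi> \<in> carrier_vec ?P" unfolding \<xi>_def by (rule xi_carrier)
  have S: "S \<in> carrier_vec p" unfolding S_def by (rule Sfun_carrier)
  have b0: "bbar \<ge> 0" by (rule bbar_nonneg[OF hyp])
  have ainj: "\<forall>y\<in>carrier_vec r. \<alpha> *\<^sub>v y = 0\<^sub>v p \<longrightarrow> y = 0\<^sub>v r"
    using alpha_inj[OF hyp a rho] by blast
  define u where "u = d - S"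
  have u: "u \<in> carrier_vec p" unfolding u_def by (rule carrier_vecI) (use S in simp)
  obtain x y where x: "x \<in> carrier_vec (p - r)" and y: "y \<in> carrier_vec r" and uxy: "u = ap *\<^sub>v x + \<alpha> *\<^sub>v y"
    using decomp[OF a ap rp apinj ainj orth u] by blast
  define A1 where "A1 = transpose_mat ap *\<^sub>v u"
  define Pd where "Pd = vnorm (Psi p k ap Th Gv w - Psi p k ap Th Gv w')"
  have PsiD: "Psi p k ap Th Gv w - Psi p k ap Th Gv w' = A1 @\<^sub>v \<eta>"
    unfolding Psi_diff[OF ap Thc Gvc w w'] A1_def u_def S_def d_def \<delta>_def \<eta>_def ..
  have hA1: "vnorm A1 \<le> Pd" unfolding Pd_def PsiD by (rule vnorm_append_ge1)
  have heta: "vnorm \<eta> \<le> Pd" unfolding Pd_def PsiD by (rule vnorm_append_ge2)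
  have Pd0: "Pd \<ge> 0" unfolding Pd_def by (rule vnorm_nonneg)
  have apx: "transpose_mat ap *\<^sub>v (ap *\<^sub>v x) = A1"
  proof -
    have "A1 = transpose_mat ap *\<^sub>v (ap *\<^sub>v x) + transpose_mat ap *\<^sub>v (\<alpha> *\<^sub>v y)"
      unfolding A1_def uxy by (rule mult_add_distrib_mat_vec[of _ "p - r" p]) (use ap a x y in auto)
    also have "transpose_mat ap *\<^sub>v (\<alpha> *\<^sub>v y) = 0\<^sub>v (p - r)"
    proof -
      have "transpose_mat ap *\<^sub>v (\<alpha> *\<^sub>v y) = (transpose_mat ap * \<alpha>) *\<^sub>v y"
        using ap a y by (simp add: assoc_mult_mat_vec)
      then show ?thesis unfolding orth using y by (simp add: zero_mat_mult_vec)
    qed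
    finally show ?thesis using ap x by simp
  qed
  have ginvc: "ginv ap \<in> carrier_mat (p - r) (p - r)" by (rule ginv(1)[OF ap apinj])
  have hx: "vnorm x \<le> mabs (ginv ap) * Pd"
  proof -
    have "x = ginv ap *\<^sub>v A1" using ginv(2)[OF ap apinj x] unfolding apx by simp
    then have "vnorm x \<le> mabs (ginv ap) * vnorm A1"
      using vnorm_mult_le[of A1 "ginv ap"] ginvc ap unfolding A1_def by auto
    also have "\<dots> \<le> mabs (ginv ap) * Pd" by (rule mult_left_mono[OF hA1 mabs_nonneg])
    finally show ?thesis .
  qed
  define z where "z = w @\<^sub>v \<xi>"
  define z' where "z' = w' @\<^sub>v 0\<^sub>v ?P"
  have z: "z \<in> carrier_vec (p + ?P)" "z' \<in> carrier_vec (p + ?P)" unfolding z_def z'_def using w w' \<xi> by auto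
  obtain \<beta> where \<beta>: "\<beta> \<in> carrier_mat (p + ?P) (r + ?P)" "mnorm \<beta> \<le> bbar"
    "sprad (1\<^sub>m (r + ?P) + transpose_mat \<beta> * ?bA) \<le> rho"
    "(Th (vec_first z p) @\<^sub>v Gv (vec_first z p)) + D0mat p k r *\<^sub>v z
         - ((Th (vec_first z' p) @\<^sub>v Gv (vec_first z' p)) + D0mat p k r *\<^sub>v z')
         = transpose_mat \<beta> *\<^sub>v (z - z')"
    using hyp z unfolding hypB_def by blast
  have fz: "vec_first z p = w" "vec_first z' p = w'" unfolding z_def z'_def using w w' by (auto simp: vec_first_append)
  have Dxi: "Dmat p k *\<^sub>v \<xi> = - \<delta>" unfolding \<xi>_def by (rule Dmat_xi[OF p \<delta>])
  have D0z: "D0mat p k r *\<^sub>v z = 0\<^sub>v r @\<^sub>v (- \<delta>)" "D0mat p k r *\<^sub>v z' = 0\<^sub>v r @\<^sub>v 0\<^sub>v ?P"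
    unfolding z_def z'_def D0_mult[OF w \<xi>] D0_mult[OF w' zero_carrier_vec] Dmat_zero Dxi by auto
  have Tw: "Th w \<in> carrier_vec r" "Th w' \<in> carrier_vec r" "Gv w \<in> carrier_vec ?P" "Gv w' \<in> carrier_vec ?P"
    using Thc Gvc w w' by auto
  have lhs: "(Th w @\<^sub>v Gv w) + (0\<^sub>v r @\<^sub>v (- \<delta>)) - ((Th w' @\<^sub>v Gv w') + (0\<^sub>v r @\<^sub>v 0\<^sub>v ?P))
      = \<eta> @\<^sub>v 0\<^sub>v ?P"
    using Tw unfolding \<eta>_def \<delta>_def by (intro eq_vecI) auto
  have rhs: "z - z' = d @\<^sub>v \<xi>" unfolding z_def z'_def d_def using w w' \<xi> by (intro eq_vecI) auto
  have E1: "\<eta> @\<^sub>v 0\<^sub>v ?P = transpose_mat \<beta> *\<^sub>v (d @\<^sub>v \<xi>)"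
    using \<beta>(4) unfolding fz D0z lhs rhs .
  have yx: "y @\<^sub>v \<xi> \<in> carrier_vec (r + ?P)" using y \<xi> by simp
  have Exi: "Etr p k *\<^sub>v \<xi> = S" unfolding \<xi>_def S_def by (rule Etr_xi[OF p \<delta>])
  have bAy: "?bA *\<^sub>v (y @\<^sub>v \<xi>) = (\<alpha> *\<^sub>v y + S) @\<^sub>v \<xi>"
    unfolding bold_alpha_mult[OF a y \<xi>] Exi ..
  have ui: "u $ i = (ap *\<^sub>v x) $ i + (\<alpha> *\<^sub>v y) $ i" if "i < p" for i
    using uxy that ap a by simp
  have ui2: "u $ i = d $ i - S $ i" if "i < p" for i unfolding u_def using that d S by simp
  have key: "d @\<^sub>v \<xi> = ?bA *\<^sub>v (y @\<^sub>v \<xi>) + ((ap *\<^sub>v x) @\<^sub>v 0\<^sub>v ?P)"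
    unfolding bAy
  proof (rule eq_vecI)
    fix i assume i: "i < dim_vec (((\<alpha> *\<^sub>v y + S) @\<^sub>v \<xi>) + ((ap *\<^sub>v x) @\<^sub>v 0\<^sub>v ?P))"
    then have i': "i < p + ?P" using ap \<xi> by simp
    show "(d @\<^sub>v \<xi>) $ i = (((\<alpha> *\<^sub>v y + S) @\<^sub>v \<xi>) + ((ap *\<^sub>v x) @\<^sub>v 0\<^sub>v ?P)) $ i"
    proof (cases "i < p")
      case True
      then show ?thesis using i' d \<xi> S a ap ui[OF True] ui2[OF True] by simp
    next
      case False
      then show ?thesis using i' d \<xi> S a ap by simp
    qed
  qed (use d \<xi> ap in simp)
  define V1 where "V1 = transpose_mat \<beta> *\<^sub>v (?bA *\<^sub>v (y @\<^sub>v \<xi>))"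
  define V2 where "V2 = transpose_mat \<beta> *\<^sub>v ((ap *\<^sub>v x) @\<^sub>v 0\<^sub>v ?P)"
  have V1c: "V1 \<in> carrier_vec (r + ?P)" unfolding V1_def by (rule carrier_vecI) (use \<beta>(1) in simp)
  have V2c: "V2 \<in> carrier_vec (r + ?P)" unfolding V2_def by (rule carrier_vecI) (use \<beta>(1) in simp)
  have sumV: "\<eta> @\<^sub>v 0\<^sub>v ?P = V1 + V2"
    unfolding E1 key V1_def V2_def
    by (rule mult_add_distrib_mat_vec[of _ "r + ?P" "p + ?P"]) (use \<beta>(1) bA yx ap x in auto)
  have V1eq: "V1 = (\<eta> @\<^sub>v 0\<^sub>v ?P) - V2" unfolding sumV using V1c V2c by (intro eq_vecI) auto
  have hV2: "vnorm V2 \<le> bbar * (mabs ap * vnorm x)"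
  proof -
    have "vnorm V2 \<le> mnorm \<beta> * vnorm ((ap *\<^sub>v x) @\<^sub>v 0\<^sub>v ?P)"
      unfolding V2_def by (rule mnorm_transpose_bound[OF \<beta>(1)]) (use ap x in auto)
    also have "\<dots> = mnorm \<beta> * vnorm (ap *\<^sub>v x)" by (simp add: vnorm_append_zero)
    also have "\<dots> \<le> bbar * (mabs ap * vnorm x)"
      by (intro mult_mono \<beta>(2) vnorm_mult_le b0 vnorm_nonneg) (use ap x in auto)
    finally show ?thesis .
  qed
  have hV1: "vnorm V1 \<le> vnorm \<eta> + bbar * (mabs ap * vnorm x)"
  proof -
    have "vnorm V1 \<le> vnorm (\<eta> @\<^sub>v 0\<^sub>v ?P) + vnorm V2"
      unfolding V1eq by (rule vnorm_minus_le) (use \<eta> V2c in simp)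
    then show ?thesis using hV2 by (simp add: vnorm_append_zero)
  qed
  define c where "c = cst_c p k r \<alpha> bbar rho"
  have c: "c > 0" unfolding c_def cst_c_def by (rule lbconst_pos) (use b0 mabs_nonneg rho in auto)
  have hc: "c * vnorm (y @\<^sub>v \<xi>) \<le> vnorm V1"
    unfolding c_def cst_c_def V1_def by (rule beta_lower[OF bA \<beta>(1) \<beta>(2) \<beta>(3) rho yx])
  define KG where "KG = mabs (ginv ap)"
  have KG: "KG \<ge> 0" unfolding KG_def by (rule mabs_nonneg)
  have hV1': "vnorm V1 \<le> (1 + bbar * mabs ap * KG) * Pd"
  proof -
    have "bbar * (mabs ap * vnorm x) \<le> bbar * (mabs ap * (KG * Pd))"
      using hx b0 mabs_nonneg[of ap] unfolding KG_def by (intro mult_left_mono) auto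
    then show ?thesis using hV1 heta by (simp add: algebra_simps)
  qed
  have hyx: "vnorm (y @\<^sub>v \<xi>) \<le> (1 + bbar * mabs ap * KG) * Pd / c"
    using hc hV1' c by (simp add: le_divide_eq mult.commute)
  have "vnorm d \<le> vnorm (d @\<^sub>v \<xi>)" by (rule vnorm_append_ge1)
  also have "\<dots> \<le> vnorm (?bA *\<^sub>v (y @\<^sub>v \<xi>)) + vnorm ((ap *\<^sub>v x) @\<^sub>v 0\<^sub>v ?P)"
    unfolding key by (rule vnorm_add) (use bA ap in simp)
  also have "\<dots> \<le> mabs ?bA * vnorm (y @\<^sub>v \<xi>) + mabs ap * vnorm x"
    unfolding vnorm_append_zero by (intro add_mono vnorm_mult_le) (use bA yx ap x y \<xi> in auto)
  also have "\<dots> \<le> mabs ?bA * ((1 + bbar * mabs ap * KG) * Pd / c) + mabs ap * (KG * Pd)"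
    by (intro add_mono mult_left_mono hyx mabs_nonneg) (use hx KG_def in auto)
  also have "\<dots> = Cl p k r \<alpha> ap bbar rho * Pd"
    unfolding Cl_def c_def KG_def by (simp add: algebra_simps)
  finally show ?thesis unfolding d_def Pd_def .
qed



lemma sum_shift1:
  fixes h :: "nat \<Rightarrow> real"
  shows "(\<Sum>i\<in>{1..k - 1}. h i) = (\<Sum>j<k - 1. h (Suc j))"
proof -
  have "{1..k - 1} = Suc ` {..<k - 1}"
  proof
    show "{1..k - 1} \<subseteq> Suc ` {..<k - 1}"
    proof
      fix i assume i: "i \<in> {1..k - 1}"
      then have "i = Suc (i - 1)" "i - 1 < k - 1" by auto
      then show "i \<in> Suc ` {..<k - 1}" by blast
    qed
    show "Suc ` {..<k - 1} \<subseteq> {1..k - 1}" by auto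
  qed
  then show ?thesis by (simp add: sum.reindex)
qed

lemma chi_Psi:
  fixes f :: "nat \<Rightarrow> real vec \<Rightarrow> real vec"
  assumes bij: "bij_betw (f 0) (carrier_vec p) (carrier_vec p)"
    and f0c: "\<forall>z\<in>carrier_vec p. f 0 z \<in> carrier_vec p"
    and z: "z \<in> carrier_vec p"
  shows "chi_map p k ap f \<theta> z
    = Psi p k ap (\<lambda>w. \<theta> (the_inv_into (carrier_vec p) (f 0) w))
                 (\<lambda>w. gvec p k f (the_inv_into (carrier_vec p) (f 0) w)) (f 0 z)"
proof -
  have inv: "the_inv_into (carrier_vec p) (f 0) (f 0 z) = z"
    by (rule the_inv_into_f_f[OF bij_betw_imp_inj_on[OF bij] z])
  have "vec p (\<lambda>l. f 0 z $ l - (\<Sum>i\<in>{1..k - 1}. gmap p k f i z $ l)) = f 0 z - Sfun p k (gvec p k f z)"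
  proof (rule eq_vecI)
    fix l assume "l < dim_vec (f 0 z - Sfun p k (gvec p k f z))"
    then have l: "l < p" by (simp add: Sfun_def)
    have "(\<Sum>i\<in>{1..k - 1}. gmap p k f i z $ l) = (\<Sum>j<k - 1. gmap p k f (Suc j) z $ l)" by (rule sum_shift1)
    also have "\<dots> = (\<Sum>j<k - 1. gvec p k f z $ (j * p + l))"
    proof (rule sum.cong[OF refl])
      fix j assume j: "j \<in> {..<k - 1}"
      have b: "j * p + l < p * (k - 1)" using idx_bound[of j k l p] j l by simp
      have "(j * p + l) div p = j" "(j * p + l) mod p = l" using l by auto
      then show "gmap p k f (Suc j) z $ l = gvec p k f z $ (j * p + l)" using b by (simp add: gvec_def)
    qed
    finally show "vec p (\<lambda>l. f 0 z $ l - (\<Sum>i\<in>{1..k - 1}. gmap p k f i z $ l)) $ l = (f 0 z - Sfun p k (gvec p k f z)) $ l"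
      using l by (simp add: Sfun_def)
  qed (simp add: Sfun_def)
  then show ?thesis unfolding chi_map_def psi_map_def Psi_def inv by simp
qed

lemma in_class_hypB:
  fixes \<alpha> :: "real mat" and f :: "nat \<Rightarrow> real vec \<Rightarrow> real vec"
  assumes k: "k \<ge> 1" and a: "\<alpha> \<in> carrier_mat p r"
    and ic: "in_class p k r \<alpha> bbar rhobar c f \<theta>"
  shows "hypB p k r \<alpha> bbar rhobar (\<lambda>w. \<theta> (the_inv_into (carrier_vec p) (f 0) w))
                 (\<lambda>w. gvec p k f (the_inv_into (carrier_vec p) (f 0) w))"
proof -
  let ?P = "p * (k - 1)"
  let ?N = "p * (k - 1) + r"
  let ?bA = "bold_alpha p k r \<alpha>"
  have kp: "k * p = p + ?P" using k by (cases k) auto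
  have NN: "r + ?P = ?N" by simp
  obtain B where B: "closed_mat_set (k * p) ?N B" "\<forall>\<beta>\<in>B. mnorm \<beta> \<le> bbar"
    "jsr ?N {1\<^sub>m ?N + transpose_mat \<beta> * ?bA | \<beta>. \<beta> \<in> B} \<le> ereal rhobar"
    "\<forall>z\<in>carrier_vec (k * p). \<forall>z'\<in>carrier_vec (k * p). \<exists>\<beta>\<in>B.
            (bold_theta p k f \<theta> (the_inv_into (carrier_vec p) (f 0) (vec_first z p)) + D0mat p k r *\<^sub>v z)
          - (bold_theta p k f \<theta> (the_inv_into (carrier_vec p) (f 0) (vec_first z' p)) + D0mat p k r *\<^sub>v z')
          = transpose_mat \<beta> *\<^sub>v (z - z')"
    using ic unfolding in_class_def by blast
  have Bc: "B \<subseteq> carrier_mat (k * p) ?N" using B(1) unfolding closed_mat_set_def by blast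
  have bA: "?bA \<in> carrier_mat (k * p) ?N" using bold_alpha_carrier[OF a, of k] kp by (simp add: add.commute)
  have AA: "{1\<^sub>m ?N + transpose_mat \<beta> * ?bA | \<beta>. \<beta> \<in> B} \<subseteq> carrier_mat ?N ?N"
    using Bc bA by auto
  show ?thesis unfolding hypB_def
  proof (intro ballI)
    fix z z' :: "real vec" assume z: "z \<in> carrier_vec (p + ?P)" and z': "z' \<in> carrier_vec (p + ?P)"
    then obtain \<beta> where \<beta>: "\<beta> \<in> B"
      "(bold_theta p k f \<theta> (the_inv_into (carrier_vec p) (f 0) (vec_first z p)) + D0mat p k r *\<^sub>v z)
          - (bold_theta p k f \<theta> (the_inv_into (carrier_vec p) (f 0) (vec_first z' p)) + D0mat p k r *\<^sub>v z')
          = transpose_mat \<beta> *\<^sub>v (z - z')"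
      using B(4) kp by auto
    have \<beta>c: "\<beta> \<in> carrier_mat (p + ?P) (r + ?P)" using Bc \<beta>(1) kp by (auto simp: add.commute)
    have "ereal (sprad (1\<^sub>m ?N + transpose_mat \<beta> * ?bA)) \<le> jsr ?N {1\<^sub>m ?N + transpose_mat \<beta> * ?bA | \<beta>. \<beta> \<in> B}"
      by (rule jsr_ge_sprad[OF AA]) (use \<beta>(1) in blast)
    also have "\<dots> \<le> ereal rhobar" by (rule B(3))
    finally have sp: "sprad (1\<^sub>m (r + ?P) + transpose_mat \<beta> * ?bA) \<le> rhobar" unfolding NN by simp
    show "\<exists>\<beta>. \<beta> \<in> carrier_mat (p + ?P) (r + ?P) \<and> mnorm \<beta> \<le> bbar
       \<and> sprad (1\<^sub>m (r + ?P) + transpose_mat \<beta> * ?bA) \<le> rhobar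
       \<and> ((\<lambda>w. \<theta> (the_inv_into (carrier_vec p) (f 0) w)) (vec_first z p) @\<^sub>v (\<lambda>w. gvec p k f (the_inv_into (carrier_vec p) (f 0) w)) (vec_first z p)) + D0mat p k r *\<^sub>v z
         - (((\<lambda>w. \<theta> (the_inv_into (carrier_vec p) (f 0) w)) (vec_first z' p) @\<^sub>v (\<lambda>w. gvec p k f (the_inv_into (carrier_vec p) (f 0) w)) (vec_first z' p)) + D0mat p k r *\<^sub>v z')
         = transpose_mat \<beta> *\<^sub>v (z - z')"
      using \<beta>c B(2) \<beta> sp unfolding bold_theta_def by auto
  qed
qed



definition scont :: "nat \<Rightarrow> (real vec \<Rightarrow> real) \<Rightarrow> bool" where
  "scont p h \<longleftrightarrow> (\<forall>x\<in>carrier_vec p. \<forall>e>0. \<exists>d>0. \<forall>y\<in>carrier_vec p. vnorm (y - x) < d \<longrightarrow> \<bar>h y - h x\<bar> < e)"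

lemma scont_coord:
  fixes F :: "real vec \<Rightarrow> real vec"
  assumes F: "vcont_on p F" and Fc: "\<forall>z\<in>carrier_vec p. F z \<in> carrier_vec q" and l: "l < q"
  shows "scont p (\<lambda>z. F z $ l)"
  unfolding scont_def
proof (intro ballI allI impI)
  fix x :: "real vec" and e :: real assume x: "x \<in> carrier_vec p" and e: "e > 0"
  obtain d where d: "d > 0" "\<forall>y\<in>carrier_vec p. vnorm (y - x) < d \<longrightarrow> vnorm (F y - F x) < e"
    using F x e unfolding vcont_on_def by blast
  show "\<exists>d>0. \<forall>y\<in>carrier_vec p. vnorm (y - x) < d \<longrightarrow> \<bar>F y $ l - F x $ l\<bar> < e"
  proof (intro exI[of _ d] conjI ballI impI)
    fix y assume y: "y \<in> carrier_vec p" "vnorm (y - x) < d"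
    have Fx: "F x \<in> carrier_vec q" "F y \<in> carrier_vec q" using Fc x y by auto
    have "\<bar>(F y - F x) $ l\<bar> \<le> vnorm (F y - F x)" by (rule vnorm_comp) (use Fx l in simp)
    moreover have "vnorm (F y - F x) < e" using d y by auto
    ultimately show "\<bar>F y $ l - F x $ l\<bar> < e" using Fx l by simp
  qed (use d in simp)
qed

lemma scont_add: "scont p g \<Longrightarrow> scont p h \<Longrightarrow> scont p (\<lambda>z. g z + h z)"
  unfolding scont_def
proof (intro ballI allI impI)
  fix x :: "real vec" and e :: real
  assume g: "\<forall>x\<in>carrier_vec p. \<forall>e>0. \<exists>d>0. \<forall>y\<in>carrier_vec p. vnorm (y - x) < d \<longrightarrow> \<bar>g y - g x\<bar> < e"
    and h: "\<forall>x\<in>carrier_vec p. \<forall>e>0. \<exists>d>0. \<forall>y\<in>carrier_vec p. vnorm (y - x) < d \<longrightarrow> \<bar>h y - h x\<bar> < e"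
    and x: "x \<in> carrier_vec p" and e: "e > 0"
  obtain d1 where d1: "d1 > 0" "\<forall>y\<in>carrier_vec p. vnorm (y - x) < d1 \<longrightarrow> \<bar>g y - g x\<bar> < e / 2"
    using g x e by (meson half_gt_zero)
  obtain d2 where d2: "d2 > 0" "\<forall>y\<in>carrier_vec p. vnorm (y - x) < d2 \<longrightarrow> \<bar>h y - h x\<bar> < e / 2"
    using h x e by (meson half_gt_zero)
  show "\<exists>d>0. \<forall>y\<in>carrier_vec p. vnorm (y - x) < d \<longrightarrow> \<bar>g y + h y - (g x + h x)\<bar> < e"
  proof (intro exI[of _ "min d1 d2"] conjI ballI impI)
    fix y assume y: "y \<in> carrier_vec p" "vnorm (y - x) < min d1 d2"
    then have "\<bar>g y - g x\<bar> < e / 2" "\<bar>h y - h x\<bar> < e / 2" using d1 d2 by auto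
    then show "\<bar>g y + h y - (g x + h x)\<bar> < e" by linarith
  qed (use d1 d2 in simp)
qed

lemma scont_neg: "scont p g \<Longrightarrow> scont p (\<lambda>z. - g z)"
  unfolding scont_def by (simp add: abs_minus_commute)

lemma scont_diff: "scont p g \<Longrightarrow> scont p h \<Longrightarrow> scont p (\<lambda>z. g z - h z)"
  using scont_add[of p g "\<lambda>z. - h z"] scont_neg[of p h] by simp

lemma scont_cong: "scont p g \<Longrightarrow> (\<forall>z\<in>carrier_vec p. h z = g z) \<Longrightarrow> scont p h"
  unfolding scont_def by simp

lemma vcont_coord:
  fixes F :: "real vec \<Rightarrow> real vec"
  assumes Fc: "\<forall>z\<in>carrier_vec p. F z \<in> carrier_vec q" and sc: "\<forall>l<q. scont p (\<lambda>z. F z $ l)"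
  shows "vcont_on p F"
  unfolding vcont_on_def
proof (intro ballI allI impI)
  fix x :: "real vec" and e :: real assume x: "x \<in> carrier_vec p" and e: "e > 0"
  have e': "e / (q + 1) > 0" using e by simp
  have "\<forall>l<q. \<exists>d>0. \<forall>y\<in>carrier_vec p. vnorm (y - x) < d \<longrightarrow> \<bar>F y $ l - F x $ l\<bar> < e / (q + 1)"
    using sc x e' unfolding scont_def by blast
  then obtain D where D: "\<forall>l<q. D l > 0 \<and> (\<forall>y\<in>carrier_vec p. vnorm (y - x) < D l \<longrightarrow> \<bar>F y $ l - F x $ l\<bar> < e / (q + 1))"
    by metis
  define d where "d = Min (insert 1 (D ` {..<q}))"
  have dpos: "d > 0" unfolding d_def using D by (subst Min_gr_iff) auto
  have dle: "d \<le> D l" if "l < q" for l unfolding d_def using that by (intro Min_le) auto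
  show "\<exists>d>0. \<forall>y\<in>carrier_vec p. vnorm (y - x) < d \<longrightarrow> vnorm (F y - F x) < e"
  proof (intro exI[of _ d] conjI ballI impI)
    fix y assume y: "y \<in> carrier_vec p" "vnorm (y - x) < d"
    have Fx: "F x \<in> carrier_vec q" "F y \<in> carrier_vec q" using Fc x y by auto
    have "vnorm (F y - F x) \<le> (\<Sum>l<q. \<bar>(F y - F x) $ l\<bar>)"
      using vnorm_le_sum[of "F y - F x"] Fx by simp
    also have "\<dots> \<le> (\<Sum>l<q. e / (q + 1))"
    proof (rule sum_mono)
      fix l assume l: "l \<in> {..<q}"
      have "vnorm (y - x) < D l" using y dle[of l] l by fastforce
      then have "\<bar>F y $ l - F x $ l\<bar> < e / (q + 1)" using D l y by auto
      then show "\<bar>(F y - F x) $ l\<bar> \<le> e / (q + 1)" using Fx l by simp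
    qed
    also have "\<dots> = q * e / (q + 1)" by simp
    also have "\<dots> < e" using e by (simp add: divide_less_eq)
    finally show "vnorm (F y - F x) < e" .
  qed (rule dpos)
qed

lemma lipcomp:
  assumes G: "\<forall>w\<in>carrier_vec p. \<forall>w'\<in>carrier_vec p. vnorm (G w - G w') \<le> L * vnorm (w - w')"
    and L: "L \<ge> 0" and F0: "vcont_on p F0" and F0c: "\<forall>z\<in>carrier_vec p. F0 z \<in> carrier_vec p"
  shows "vcont_on p (\<lambda>z. G (F0 z))"
  unfolding vcont_on_def
proof (intro ballI allI impI)
  fix x :: "real vec" and e :: real assume x: "x \<in> carrier_vec p" and e: "e > 0"
  have e': "e / (L + 1) > 0" using e L by simp
  obtain d where d: "d > 0" "\<forall>y\<in>carrier_vec p. vnorm (y - x) < d \<longrightarrow> vnorm (F0 y - F0 x) < e / (L + 1)"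
    using F0 x e' unfolding vcont_on_def by blast
  show "\<exists>d>0. \<forall>y\<in>carrier_vec p. vnorm (y - x) < d \<longrightarrow> vnorm (G (F0 y) - G (F0 x)) < e"
  proof (intro exI[of _ d] conjI ballI impI)
    fix y assume y: "y \<in> carrier_vec p" "vnorm (y - x) < d"
    have "vnorm (G (F0 y) - G (F0 x)) \<le> L * vnorm (F0 y - F0 x)" using G F0c x y by auto
    also have "\<dots> \<le> L * (e / (L + 1))" using d y L by (intro mult_left_mono) auto
    also have "\<dots> < e" using e L by (simp add: divide_less_eq)
    finally show "vnorm (G (F0 y) - G (F0 x)) < e" .
  qed (rule d(1))
qed



lemma vcont_id: "vcont_on p (\<lambda>z. z)"
  unfolding vcont_on_def by blast

lemma vcont_cong: "vcont_on p g \<Longrightarrow> (\<forall>z\<in>carrier_vec p. h z = g z) \<Longrightarrow> vcont_on p h"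
  unfolding vcont_on_def by simp

lemma lip_vcont:
  assumes G: "\<forall>w\<in>carrier_vec p. \<forall>w'\<in>carrier_vec p. vnorm (G w - G w') \<le> L * vnorm (w - w')"
    and L: "L \<ge> 0"
  shows "vcont_on p G"
  using lipcomp[OF G L vcont_id] by simp

lemma inv_cont:
  fixes f0 Psi chi :: "real vec \<Rightarrow> real vec"
  assumes bij0: "bij_betw f0 (carrier_vec p) (carrier_vec p)"
    and ic: "vcont_on p (the_inv_into (carrier_vec p) f0)"
    and lo: "\<forall>w\<in>carrier_vec p. \<forall>w'\<in>carrier_vec p. vnorm (w - w') \<le> C * vnorm (Psi w - Psi w')"
    and C: "C \<ge> 0"
    and chi: "\<forall>z\<in>carrier_vec p. chi z = Psi (f0 z)"
    and bij: "bij_betw chi (carrier_vec p) (carrier_vec p)"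
  shows "vcont_on p (the_inv_into (carrier_vec p) chi)"
  unfolding vcont_on_def
proof (intro ballI allI impI)
  let ?C = "carrier_vec p :: real vec set"
  let ?ci = "the_inv_into ?C chi"
  let ?i0 = "the_inv_into ?C f0"
  fix y0 :: "real vec" and e :: real assume y0: "y0 \<in> ?C" and e: "e > 0"
  define x0 where "x0 = ?ci y0"
  have x0: "x0 \<in> ?C" "chi x0 = y0" unfolding x0_def
    using bij_betw_apply[OF bij_betw_the_inv_into[OF bij] y0] f_the_inv_into_f_bij_betw[OF bij] y0 by auto
  define w0 where "w0 = f0 x0"
  have w0: "w0 \<in> ?C" unfolding w0_def using bij_betw_apply[OF bij0 x0(1)] .
  have iw0: "?i0 w0 = x0" unfolding w0_def by (rule the_inv_into_f_f[OF bij_betw_imp_inj_on[OF bij0] x0(1)])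
  obtain d1 where d1: "d1 > 0" "\<forall>w\<in>?C. vnorm (w - w0) < d1 \<longrightarrow> vnorm (?i0 w - ?i0 w0) < e"
    using ic w0 e unfolding vcont_on_def by blast
  show "\<exists>d>0. \<forall>y\<in>?C. vnorm (y - y0) < d \<longrightarrow> vnorm (?ci y - ?ci y0) < e"
  proof (intro exI[of _ "d1 / (C + 1)"] conjI ballI impI)
    show "d1 / (C + 1) > 0" using d1 C by simp
    fix y assume y: "y \<in> ?C" and yd: "vnorm (y - y0) < d1 / (C + 1)"
    define x where "x = ?ci y"
    have x: "x \<in> ?C" "chi x = y" unfolding x_def
      using bij_betw_apply[OF bij_betw_the_inv_into[OF bij] y] f_the_inv_into_f_bij_betw[OF bij] y by auto
    define w where "w = f0 x"
    have w: "w \<in> ?C" unfolding w_def using bij_betw_apply[OF bij0 x(1)] .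
    have iw: "?i0 w = x" unfolding w_def by (rule the_inv_into_f_f[OF bij_betw_imp_inj_on[OF bij0] x(1)])
    have "vnorm (w - w0) \<le> C * vnorm (Psi w - Psi w0)" using lo w w0 by blast
    also have "Psi w - Psi w0 = y - y0" using chi x x0 unfolding w_def w0_def by auto
    also have "C * vnorm (y - y0) \<le> (C + 1) * vnorm (y - y0)" using vnorm_nonneg[of "y - y0"] by (simp add: algebra_simps)
    also have "\<dots> < (C + 1) * (d1 / (C + 1))" using yd C by (intro mult_strict_left_mono) auto
    also have "\<dots> = d1" using C by simp
    finally have "vnorm (w - w0) < d1" .
    then have "vnorm (?i0 w - ?i0 w0) < e" using d1 w by blast
    then show "vnorm (?ci y - ?ci y0) < e" using iw iw0 unfolding x_def x0_def by simp
  qed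
qed



lemma main_facts:
  fixes \<alpha> ap :: "real mat" and f :: "nat \<Rightarrow> real vec \<Rightarrow> real vec" and \<theta> :: "real vec \<Rightarrow> real vec"
  assumes p0: "p > 0" and k: "k \<ge> 1" and rp: "r < p"
    and a: "\<alpha> \<in> carrier_mat p r" and ap: "ap \<in> carrier_mat p (p - r)"
    and apinj: "\<forall>x\<in>carrier_vec (p - r). ap *\<^sub>v x = 0\<^sub>v p \<longrightarrow> x = 0\<^sub>v (p - r)"
    and orth: "transpose_mat ap * \<alpha> = 0\<^sub>m (p - r) r" and rho: "rhobar < 1"
    and fc: "\<forall>i\<le>k. (\<forall>z\<in>carrier_vec p. f i z \<in> carrier_vec p) \<and> f i (0\<^sub>v p) = 0\<^sub>v p"
    and ic: "in_class p k r \<alpha> bbar rhobar c f \<theta>"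
  shows "vhomeo p (chi_map p k ap f \<theta>)"
    and "\<forall>x\<in>carrier_vec p. \<forall>y\<in>carrier_vec p. vnorm (chi_map p k ap f \<theta> x - chi_map p k ap f \<theta> y)
            \<le> Lu p k ap bbar * vnorm (f 0 x - f 0 y)"
    and "\<forall>x\<in>carrier_vec p. \<forall>y\<in>carrier_vec p. vnorm (f 0 x - f 0 y)
            \<le> Cl p k r \<alpha> ap bbar rhobar * vnorm (chi_map p k ap f \<theta> x - chi_map p k ap f \<theta> y)"
    and "Lu p k ap bbar \<ge> 0" and "Cl p k r \<alpha> ap bbar rhobar \<ge> 0"
    and "bij_betw (f 0) (carrier_vec p) (carrier_vec p)"
    and "\<forall>w\<in>carrier_vec p. \<forall>w'\<in>carrier_vec p.
           vnorm (\<theta> (the_inv_into (carrier_vec p) (f 0) w) - \<theta> (the_inv_into (carrier_vec p) (f 0) w')) \<le> bbar * vnorm (w - w')"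
    and "\<forall>w\<in>carrier_vec p. \<forall>w'\<in>carrier_vec p.
           vnorm (gvec p k f (the_inv_into (carrier_vec p) (f 0) w) - gvec p k f (the_inv_into (carrier_vec p) (f 0) w')) \<le> bbar * vnorm (w - w')"
    and "bbar \<ge> 0"
proof -
  let ?C = "carrier_vec p :: real vec set"
  let ?i0 = "the_inv_into ?C (f 0)"
  let ?chi = "chi_map p k ap f \<theta>"
  have hom: "vhomeo p (f 0)" using ic unfolding in_class_def by blast
  then have bij0: "bij_betw (f 0) ?C ?C" and c0: "vcont_on p (f 0)" and ci0: "vcont_on p ?i0"
    unfolding vhomeo_def by auto
  have f0c: "\<forall>z\<in>?C. f 0 z \<in> ?C" using fc by auto
  have i0c: "\<forall>w\<in>?C. ?i0 w \<in> ?C" using bij_betw_apply[OF bij_betw_the_inv_into[OF bij0]] by blast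
  have thc: "\<forall>z\<in>?C. \<theta> z \<in> carrier_vec r" using ic unfolding in_class_def by blast
  define Th where "Th w = \<theta> (?i0 w)" for w
  define Gv where "Gv w = gvec p k f (?i0 w)" for w
  have Thc: "\<forall>w\<in>?C. Th w \<in> carrier_vec r" unfolding Th_def using thc i0c by blast
  have Gvc: "\<forall>w\<in>?C. Gv w \<in> carrier_vec (p * (k - 1))" unfolding Gv_def gvec_def by simp
  have hyp: "hypB p k r \<alpha> bbar rhobar Th Gv" unfolding Th_def Gv_def by (rule in_class_hypB[OF k a ic])
  have b0: "bbar \<ge> 0" by (rule bbar_nonneg[OF hyp])
  define Ps where "Ps = Psi p k ap Th Gv"
  have up: "\<forall>w\<in>?C. \<forall>w'\<in>?C. vnorm (Ps w - Ps w') \<le> Lu p k ap bbar * vnorm (w - w')"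
    unfolding Ps_def using core_upper[OF hyp ap Thc Gvc] by blast
  have lo: "\<forall>w\<in>?C. \<forall>w'\<in>?C. vnorm (w - w') \<le> Cl p k r \<alpha> ap bbar rhobar * vnorm (Ps w - Ps w')"
    unfolding Ps_def using core_lower[OF hyp p0 _ a ap apinj orth rho Thc Gvc] rp by auto
  have chiPs: "\<forall>z\<in>?C. ?chi z = Ps (f 0 z)"
    unfolding Ps_def Th_def Gv_def using chi_Psi[of f p, OF bij0 f0c] by blast
  have Lu0: "Lu p k ap bbar \<ge> 0" unfolding Lu_def using b0 mabs_nonneg[of "transpose_mat ap"] by simp
  have cpos: "cst_c p k r \<alpha> bbar rhobar > 0" unfolding cst_c_def by (rule lbconst_pos) (use b0 mabs_nonneg rho in auto)
  have Cl0: "Cl p k r \<alpha> ap bbar rhobar \<ge> 0" unfolding Cl_def using b0 cpos mabs_nonneg[of ap]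
      mabs_nonneg[of "ginv ap"] mabs_nonneg[of "bold_alpha p k r \<alpha>"] by simp
  have Psc: "\<forall>w\<in>?C. Ps w \<in> ?C"
  proof
    fix w :: "real vec" assume w: "w \<in> ?C"
    have "Ps w \<in> carrier_vec ((p - r) + r)" unfolding Ps_def Psi_def using ap Thc w
      by (intro append_carrier_vec) (auto intro!: carrier_vecI)
    then show "Ps w \<in> ?C" using rp by simp
  qed
  have Pscont: "vcont_on p Ps" by (rule lip_vcont[OF up Lu0])
  define cc where "cc = 1 / (Cl p k r \<alpha> ap bbar rhobar + 1)"
  have cc: "cc > 0" unfolding cc_def using Cl0 by simp
  have low': "\<forall>x\<in>?C. \<forall>y\<in>?C. cc * vnorm (x - y) \<le> vnorm (Ps x - Ps y)"
  proof (intro ballI)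
    fix x y :: "real vec" assume x: "x \<in> ?C" and y: "y \<in> ?C"
    have "vnorm (x - y) \<le> Cl p k r \<alpha> ap bbar rhobar * vnorm (Ps x - Ps y)" using lo x y by blast
    also have "\<dots> \<le> (Cl p k r \<alpha> ap bbar rhobar + 1) * vnorm (Ps x - Ps y)"
      using vnorm_nonneg[of "Ps x - Ps y"] by (simp add: algebra_simps)
    finally show "cc * vnorm (x - y) \<le> vnorm (Ps x - Ps y)" unfolding cc_def using Cl0
      by (simp add: divide_le_eq mult.commute)
  qed
  have surjPs: "Ps ` ?C = ?C" by (rule surj_lower_lip[OF Psc Pscont cc low'])
  have injPs: "inj_on Ps ?C"
  proof
    fix x y assume x: "x \<in> ?C" and y: "y \<in> ?C" and eq: "Ps x = Ps y"
    have "vnorm (x - y) \<le> Cl p k r \<alpha> ap bbar rhobar * vnorm (Ps x - Ps y)" using lo x y by blast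
    also have "Ps x - Ps y = 0\<^sub>v p" unfolding eq using Psc y by (simp add: minus_cancel_vec)
    finally have "vnorm (x - y) \<le> 0" by simp
    then have "vnorm (x - y) = 0" using vnorm_nonneg[of "x - y"] by simp
    then have "x - y = 0\<^sub>v p" using vnorm_zero_iff[of "x - y"] y by simp
    then have xy0: "x - y = 0\<^sub>v p" .
    show "x = y"
    proof (rule eq_vecI)
      fix i assume i: "i < dim_vec y"
      then have "(x - y) $ i = 0" using xy0 y by simp
      then show "x $ i = y $ i" using x y i by simp
    qed (use x y in simp)
  qed
  have bijPs: "bij_betw Ps ?C ?C" unfolding bij_betw_def using injPs surjPs by blast
  have bijchi: "bij_betw ?chi ?C ?C"
  proof -
    have "bij_betw (Ps \<circ> f 0) ?C ?C" by (rule bij_betw_trans[OF bij0 bijPs])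
    then show ?thesis using chiPs by (subst bij_betw_cong[of _ _ "Ps \<circ> f 0"]) auto
  qed
  have chicont: "vcont_on p ?chi"
    by (rule vcont_cong[OF lipcomp[OF up Lu0 c0 f0c]]) (use chiPs in auto)
  have chiinv: "vcont_on p (the_inv_into ?C ?chi)"
    by (rule inv_cont[OF bij0 ci0 lo Cl0 chiPs bijchi])
  show "vhomeo p ?chi" unfolding vhomeo_def using bijchi chicont chiinv by blast
  show "\<forall>x\<in>?C. \<forall>y\<in>?C. vnorm (?chi x - ?chi y) \<le> Lu p k ap bbar * vnorm (f 0 x - f 0 y)"
    using up chiPs f0c by auto
  show "\<forall>x\<in>?C. \<forall>y\<in>?C. vnorm (f 0 x - f 0 y) \<le> Cl p k r \<alpha> ap bbar rhobar * vnorm (?chi x - ?chi y)"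
    using lo chiPs f0c by auto
  show "Lu p k ap bbar \<ge> 0" by (rule Lu0)
  show "Cl p k r \<alpha> ap bbar rhobar \<ge> 0" by (rule Cl0)
  show "bij_betw (f 0) ?C ?C" by (rule bij0)
  show "\<forall>w\<in>?C. \<forall>w'\<in>?C. vnorm (\<theta> (?i0 w) - \<theta> (?i0 w')) \<le> bbar * vnorm (w - w')"
  proof (intro ballI)
    fix w w' :: "real vec" assume w: "w \<in> ?C" and w': "w' \<in> ?C"
    have "vnorm (Th w - Th w') \<le> vnorm ((Th w - Th w') @\<^sub>v (Gv w - Gv w'))" by (rule vnorm_append_ge1)
    also have "\<dots> \<le> bbar * vnorm (w - w')" by (rule core_zeta0[OF hyp Thc Gvc w w'])
    finally show "vnorm (\<theta> (?i0 w) - \<theta> (?i0 w')) \<le> bbar * vnorm (w - w')" unfolding Th_def .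
  qed
  show "\<forall>w\<in>?C. \<forall>w'\<in>?C. vnorm (gvec p k f (?i0 w) - gvec p k f (?i0 w')) \<le> bbar * vnorm (w - w')"
  proof (intro ballI)
    fix w w' :: "real vec" assume w: "w \<in> ?C" and w': "w' \<in> ?C"
    have "vnorm (Gv w - Gv w') \<le> vnorm ((Th w - Th w') @\<^sub>v (Gv w - Gv w'))" by (rule vnorm_append_ge2)
    also have "\<dots> \<le> bbar * vnorm (w - w')" by (rule core_zeta0[OF hyp Thc Gvc w w'])
    finally show "vnorm (gvec p k f (?i0 w) - gvec p k f (?i0 w')) \<le> bbar * vnorm (w - w')" unfolding Gv_def .
  qed
  show "bbar \<ge> 0" by (rule b0)
qed



lemma gvec_idx:
  assumes j: "j < k - 1" and l: "l < p"
  shows "gvec p k f z $ (j * p + l) = gmap p k f (Suc j) z $ l"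
proof -
  have b: "j * p + l < p * (k - 1)" by (rule idx_bound[OF j l])
  have "(j * p + l) div p = j" "(j * p + l) mod p = l" using l by auto
  then show ?thesis using b by (simp add: gvec_def)
qed

lemma fi_cont:
  fixes \<alpha> ap :: "real mat" and f :: "nat \<Rightarrow> real vec \<Rightarrow> real vec" and \<theta> :: "real vec \<Rightarrow> real vec"
  assumes p0: "p > 0" and k: "k \<ge> 1" and rp: "r < p"
    and a: "\<alpha> \<in> carrier_mat p r" and ap: "ap \<in> carrier_mat p (p - r)"
    and apinj: "\<forall>x\<in>carrier_vec (p - r). ap *\<^sub>v x = 0\<^sub>v p \<longrightarrow> x = 0\<^sub>v (p - r)"
    and orth: "transpose_mat ap * \<alpha> = 0\<^sub>m (p - r) r" and rho: "rhobar < 1"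
    and fc: "\<forall>i\<le>k. (\<forall>z\<in>carrier_vec p. f i z \<in> carrier_vec p) \<and> f i (0\<^sub>v p) = 0\<^sub>v p"
    and ic: "in_class p k r \<alpha> bbar rhobar c f \<theta>"
    and i: "i \<in> {1..k - 1}"
  shows "vcont_on p (f i)"
proof -
  let ?C = "carrier_vec p :: real vec set"
  let ?i0 = "the_inv_into ?C (f 0)"
  let ?P = "p * (k - 1)"
  note mf = main_facts[OF p0 k rp a ap apinj orth rho fc ic]
  have bij0: "bij_betw (f 0) ?C ?C" by (rule mf(6))
  have hom: "vhomeo p (f 0)" using ic unfolding in_class_def by blast
  then have c0: "vcont_on p (f 0)" unfolding vhomeo_def by auto
  have f0c: "\<forall>z\<in>?C. f 0 z \<in> ?C" using fc by auto
  have b0: "bbar \<ge> 0" by (rule mf(9))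
  have inv: "?i0 (f 0 z) = z" if "z \<in> ?C" for z
    by (rule the_inv_into_f_f[OF bij_betw_imp_inj_on[OF bij0] that])
  have thc: "\<forall>z\<in>?C. \<theta> z \<in> carrier_vec r" and pim: "\<forall>z\<in>?C. pimap p k f z = \<alpha> *\<^sub>v \<theta> z"
    using ic unfolding in_class_def by blast+
  have i0c: "\<forall>w\<in>?C. ?i0 w \<in> ?C" using bij_betw_apply[OF bij_betw_the_inv_into[OF bij0]] by blast
  have gcont: "vcont_on p (gvec p k f)"
    by (rule vcont_cong[OF lipcomp[OF mf(8) b0 c0 f0c]]) (use inv in simp)
  have gc: "\<forall>z\<in>?C. gvec p k f z \<in> carrier_vec ?P" unfolding gvec_def by simp
  have atlip: "\<forall>w\<in>?C. \<forall>w'\<in>?C. vnorm (\<alpha> *\<^sub>v \<theta> (?i0 w) - \<alpha> *\<^sub>v \<theta> (?i0 w')) \<le> (mabs \<alpha> * bbar) * vnorm (w - w')"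
  proof (intro ballI)
    fix w w' :: "real vec" assume w: "w \<in> ?C" and w': "w' \<in> ?C"
    have t: "\<theta> (?i0 w) \<in> carrier_vec r" "\<theta> (?i0 w') \<in> carrier_vec r" using thc i0c w w' by auto
    have "\<alpha> *\<^sub>v \<theta> (?i0 w) - \<alpha> *\<^sub>v \<theta> (?i0 w') = \<alpha> *\<^sub>v (\<theta> (?i0 w) - \<theta> (?i0 w'))"
      by (rule mult_minus_distrib_mat_vec[symmetric, OF a t])
    then have "vnorm (\<alpha> *\<^sub>v \<theta> (?i0 w) - \<alpha> *\<^sub>v \<theta> (?i0 w')) \<le> mabs \<alpha> * vnorm (\<theta> (?i0 w) - \<theta> (?i0 w'))"
      using vnorm_mult_le[of "\<theta> (?i0 w) - \<theta> (?i0 w')" \<alpha>] a t by auto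
    also have "\<dots> \<le> mabs \<alpha> * (bbar * vnorm (w - w'))"
      using mf(7) w w' by (intro mult_left_mono mabs_nonneg) auto
    finally show "vnorm (\<alpha> *\<^sub>v \<theta> (?i0 w) - \<alpha> *\<^sub>v \<theta> (?i0 w')) \<le> (mabs \<alpha> * bbar) * vnorm (w - w')"
      by (simp add: ac_simps)
  qed
  have atcont: "vcont_on p (\<lambda>z. \<alpha> *\<^sub>v \<theta> z)"
    by (rule vcont_cong[OF lipcomp[OF atlip _ c0 f0c]]) (use inv b0 mabs_nonneg[of \<alpha>] in simp_all)
  have atc: "\<forall>z\<in>?C. \<alpha> *\<^sub>v \<theta> z \<in> ?C" using a by (auto intro!: carrier_vecI)
  have k2: "k \<ge> 2" using i by auto
  have fic: "\<forall>z\<in>?C. f i z \<in> ?C" using fc i by auto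
  show ?thesis
  proof (rule vcont_coord[OF fic], intro allI impI)
    fix l assume l: "l < p"
    have sf0: "scont p (\<lambda>z. f 0 z $ l)" by (rule scont_coord[OF c0 f0c l])
    have sat: "scont p (\<lambda>z. (\<alpha> *\<^sub>v \<theta> z) $ l)" by (rule scont_coord[OF atcont atc l])
    have sg: "scont p (\<lambda>z. gvec p k f z $ (j * p + l))" if "j < k - 1" for j
      by (rule scont_coord[OF gcont gc idx_bound[OF that l]])
    have gm: "gmap p k f j z $ l = - (\<Sum>i\<in>{j+1..k}. f i z $ l)" for j z
      using l by (simp add: gmap_def)
    show "scont p (\<lambda>z. f i z $ l)"
    proof (cases "i = 1")
      case True
      have eq: "f i z $ l = gvec p k f z $ (0 * p + l) + f 0 z $ l + (\<alpha> *\<^sub>v \<theta> z) $ l" if z: "z \<in> ?C" for z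
      proof -
        have "gvec p k f z $ (0 * p + l) = gmap p k f 1 z $ l" using gvec_idx[of 0 k l p f z] k2 l by simp
        also have "\<dots> = - (\<Sum>i\<in>{2..k}. f i z $ l)" using gm by (simp add: numeral_2_eq_2)
        finally have g1: "gvec p k f z $ (0 * p + l) = - (\<Sum>i\<in>{2..k}. f i z $ l)" .
        have "(\<alpha> *\<^sub>v \<theta> z) $ l = pimap p k f z $ l" using pim z by simp
        also have "\<dots> = - f 0 z $ l + (\<Sum>i\<in>{1..k}. f i z $ l)" using l by (simp add: pimap_def)
        also have "(\<Sum>i\<in>{1..k}. f i z $ l) = f 1 z $ l + (\<Sum>i\<in>{2..k}. f i z $ l)"
          using sum.atLeast_Suc_atMost[of 1 k "\<lambda>i. f i z $ l"] k by (simp add: numeral_2_eq_2)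
        finally show ?thesis using g1 True by simp
      qed
      have "scont p (\<lambda>z. gvec p k f z $ (0 * p + l) + f 0 z $ l + (\<alpha> *\<^sub>v \<theta> z) $ l)"
        using sg[of 0] k2 by (intro scont_add sf0 sat) auto
      then show ?thesis by (rule scont_cong) (use eq in simp)
    next
      case False
      then have i2: "i \<ge> 2" "i \<le> k - 1" using i by auto
      define j where "j = i - 2"
      have j: "j < k - 1" "Suc j < k - 1" "i = Suc (Suc j)" using i2 unfolding j_def by auto
      have eq: "f i z $ l = gvec p k f z $ (Suc j * p + l) - gvec p k f z $ (j * p + l)" if z: "z \<in> ?C" for z
      proof -
        have "gvec p k f z $ (Suc j * p + l) = - (\<Sum>i'\<in>{i+1..k}. f i' z $ l)"
          using gvec_idx[OF j(2) l] gm j(3) by simp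
        moreover have "gvec p k f z $ (j * p + l) = - (\<Sum>i'\<in>{i..k}. f i' z $ l)"
          using gvec_idx[OF j(1) l] gm j(3) by simp
        moreover have "(\<Sum>i'\<in>{i..k}. f i' z $ l) = f i z $ l + (\<Sum>i'\<in>{i+1..k}. f i' z $ l)"
          using sum.atLeast_Suc_atMost[of i k "\<lambda>i'. f i' z $ l"] i2 by simp
        ultimately show ?thesis by simp
      qed
      have "scont p (\<lambda>z. gvec p k f z $ (Suc j * p + l) - gvec p k f z $ (j * p + l))"
        by (intro scont_diff sg j)
      then show ?thesis by (rule scont_cong) (use eq in simp)
    qed
  qed
qed


theorem lemmaB4:
  fixes p k r :: nat and \<alpha> \<alpha>perp :: "real mat" and bbar rhobar :: real
  assumes "p \<ge> 1" and "k \<ge> 1" and "r < p"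
    and "\<alpha> \<in> carrier_mat p r" and "vec_space.rank p \<alpha> = r"
    and "\<alpha>perp \<in> carrier_mat p (p - r)" and "vec_space.rank p \<alpha>perp = p - r"
    and "transpose_mat \<alpha>perp * \<alpha> = 0\<^sub>m (p - r) r"
    and "rhobar < 1"
  shows
    "(\<forall>c f \<theta>. c \<in> carrier_vec p
        \<and> (\<forall>i\<le>k. (\<forall>z\<in>carrier_vec p. f i z \<in> carrier_vec p) \<and> f i (0\<^sub>v p) = 0\<^sub>v p)
        \<and> in_class p k r \<alpha> bbar rhobar c f \<theta>
      \<longrightarrow> (\<forall>i\<in>{1..k-1}. vcont_on p (f i)) \<and> vhomeo p (chi_map p k \<alpha>perp f \<theta>))
   \<and> (\<exists>K :: real \<Rightarrow> real. \<forall>Cf c f \<theta>. c \<in> carrier_vec p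
        \<and> (\<forall>i\<le>k. (\<forall>z\<in>carrier_vec p. f i z \<in> carrier_vec p) \<and> f i (0\<^sub>v p) = 0\<^sub>v p)
        \<and> in_class p k r \<alpha> bbar rhobar c f \<theta> \<and> bilip p (f 0) Cf
      \<longrightarrow> bilip p (chi_map p k \<alpha>perp f \<theta>) (K Cf))"
proof -
  have p0: "p > 0" using assms(1) by simp
  have k: "k \<ge> 1" by (rule assms(2))
  have rp: "r < p" by (rule assms(3))
  have a: "\<alpha> \<in> carrier_mat p r" by (rule assms(4))
  have ap: "\<alpha>perp \<in> carrier_mat p (p - r)" by (rule assms(6))
  have orth: "transpose_mat \<alpha>perp * \<alpha> = 0\<^sub>m (p - r) r" by (rule assms(8))
  have rho: "rhobar < 1" by (rule assms(9))
  have apinj: "\<forall>x\<in>carrier_vec (p - r). \<alpha>perp *\<^sub>v x = 0\<^sub>v p \<longrightarrow> x = 0\<^sub>v (p - r)"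
    using rank_inj[OF ap assms(7)] by blast
  show ?thesis
  proof (intro conjI allI impI)
    fix c f \<theta>
    assume h: "c \<in> carrier_vec p \<and> (\<forall>i\<le>k. (\<forall>z\<in>carrier_vec p. f i z \<in> carrier_vec p) \<and> f i (0\<^sub>v p) = 0\<^sub>v p)
        \<and> in_class p k r \<alpha> bbar rhobar c f \<theta>"
    then have fc: "\<forall>i\<le>k. (\<forall>z\<in>carrier_vec p. f i z \<in> carrier_vec p) \<and> f i (0\<^sub>v p) = 0\<^sub>v p"
      and ic: "in_class p k r \<alpha> bbar rhobar c f \<theta>" by auto
    show "\<forall>i\<in>{1..k - 1}. vcont_on p (f i)"
      using fi_cont[OF p0 k rp a ap apinj orth rho fc ic] by blast
    show "vhomeo p (chi_map p k \<alpha>perp f \<theta>)"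
      by (rule main_facts(1)[OF p0 k rp a ap apinj orth rho fc ic])
  next
    define K where "K Cf = (Lu p k \<alpha>perp bbar + Cl p k r \<alpha> \<alpha>perp bbar rhobar + 1) * Cf" for Cf :: real
    show "\<exists>K :: real \<Rightarrow> real. \<forall>Cf c f \<theta>. c \<in> carrier_vec p
        \<and> (\<forall>i\<le>k. (\<forall>z\<in>carrier_vec p. f i z \<in> carrier_vec p) \<and> f i (0\<^sub>v p) = 0\<^sub>v p)
        \<and> in_class p k r \<alpha> bbar rhobar c f \<theta> \<and> bilip p (f 0) Cf
      \<longrightarrow> bilip p (chi_map p k \<alpha>perp f \<theta>) (K Cf)"
    proof (intro exI[of _ K] allI impI)
      fix Cf c f \<theta>
      assume h: "c \<in> carrier_vec p
        \<and> (\<forall>i\<le>k. (\<forall>z\<in>carrier_vec p. f i z \<in> carrier_vec p) \<and> f i (0\<^sub>v p) = 0\<^sub>v p)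
        \<and> in_class p k r \<alpha> bbar rhobar c f \<theta> \<and> bilip p (f 0) Cf"
      then have fc: "\<forall>i\<le>k. (\<forall>z\<in>carrier_vec p. f i z \<in> carrier_vec p) \<and> f i (0\<^sub>v p) = 0\<^sub>v p"
        and ic: "in_class p k r \<alpha> bbar rhobar c f \<theta>" and bl: "bilip p (f 0) Cf" by auto
      note mf = main_facts[OF p0 k rp a ap apinj orth rho fc ic]
      let ?chi = "chi_map p k \<alpha>perp f \<theta>"
      let ?Lu = "Lu p k \<alpha>perp bbar"
      let ?Cl = "Cl p k r \<alpha> \<alpha>perp bbar rhobar"
      have f0c: "\<forall>z\<in>carrier_vec p. f 0 z \<in> carrier_vec p" using fc by auto
      have Cf: "Cf > 0"
      proof (rule ccontr)
        assume "\<not> Cf > 0"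
        then have Cf0: "Cf \<le> 0" by simp
        define x where "x = (0\<^sub>v p :: real vec)"
        define y where "y = (unit_vec p 0 :: real vec)"
        have x: "x \<in> carrier_vec p" and y: "y \<in> carrier_vec p" unfolding x_def y_def by auto
        have "vnorm (f 0 x - f 0 y) \<le> Cf * vnorm (x - y)" using bl x y unfolding bilip_def by blast
        also have "\<dots> \<le> 0" using Cf0 vnorm_nonneg[of "x - y"] by (simp add: mult_nonpos_nonneg)
        finally have "vnorm (f 0 x - f 0 y) = 0" using vnorm_nonneg[of "f 0 x - f 0 y"] by simp
        have Fx: "f 0 x \<in> carrier_vec p" "f 0 y \<in> carrier_vec p" using f0c x y by auto
        then have z: "f 0 x - f 0 y = 0\<^sub>v p" using vnorm_zero_iff[of "f 0 x - f 0 y"] \<open>vnorm (f 0 x - f 0 y) = 0\<close> by simp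
        have "f 0 x = f 0 y"
        proof (rule eq_vecI)
          fix i assume "i < dim_vec (f 0 y)"
          then have i: "i < p" using Fx by auto
          then have "(f 0 x - f 0 y) $ i = 0" using z by simp
          then show "f 0 x $ i = f 0 y $ i" using i Fx by simp
        qed (use Fx in simp)
        then have "x = y" using bij_betw_imp_inj_on[OF mf(6)] x y unfolding inj_on_def by blast
        moreover have "y $ 0 = 1" "x $ 0 = 0" unfolding x_def y_def using p0 by auto
        ultimately show False by simp
      qed
      have KCf: "K Cf = (?Lu + ?Cl + 1) * Cf" unfolding K_def ..
      have Kpos: "K Cf > 0" unfolding KCf using mf(4) mf(5) Cf by simp
      show "bilip p ?chi (K Cf)" unfolding bilip_def
      proof (intro ballI conjI)
        fix x y :: "real vec" assume x: "x \<in> carrier_vec p" and y: "y \<in> carrier_vec p"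
        have b1: "inverse Cf * vnorm (x - y) \<le> vnorm (f 0 x - f 0 y)"
          and b2: "vnorm (f 0 x - f 0 y) \<le> Cf * vnorm (x - y)" using bl x y unfolding bilip_def by auto
        have u: "vnorm (?chi x - ?chi y) \<le> ?Lu * vnorm (f 0 x - f 0 y)" using mf(2) x y by blast
        have l: "vnorm (f 0 x - f 0 y) \<le> ?Cl * vnorm (?chi x - ?chi y)" using mf(3) x y by blast
        have xy: "vnorm (x - y) \<le> Cf * vnorm (f 0 x - f 0 y)"
          using b1 Cf by (simp add: field_simps)
        have "vnorm (?chi x - ?chi y) \<le> ?Lu * (Cf * vnorm (x - y))"
          using u b2 mf(4) by (meson mult_left_mono order_trans)
        also have "\<dots> \<le> K Cf * vnorm (x - y)"
          unfolding KCf using mf(4) mf(5) Cf vnorm_nonneg[of "x - y"]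
          by (simp add: algebra_simps mult_nonneg_nonneg)
        finally show "vnorm (?chi x - ?chi y) \<le> K Cf * vnorm (x - y)" .
        have "vnorm (x - y) \<le> Cf * (?Cl * vnorm (?chi x - ?chi y))"
          using xy l Cf by (meson mult_left_mono order_trans less_imp_le)
        also have "\<dots> \<le> K Cf * vnorm (?chi x - ?chi y)"
          unfolding KCf using mf(4) mf(5) Cf vnorm_nonneg[of "?chi x - ?chi y"]
          by (simp add: algebra_simps mult_nonneg_nonneg)
        finally have "vnorm (x - y) \<le> K Cf * vnorm (?chi x - ?chi y)" .
        then show "inverse (K Cf) * vnorm (x - y) \<le> vnorm (?chi x - ?chi y)"
          using Kpos by (simp add: field_simps)
      qed
    qed
  qed
qed

end
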